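(* Let $\mu_0$ satisfy Assumptions A and B(b), and suppose in addition that $x^*$ is the rightmost point of $\operatorname{supp}(\mu_0)$. Let $0<\tau\le\tau_{\mathrm{crit}}$ and $x^*_\tau=x^*+\tau\int\frac{d\mu_0(s)}{x^*-s}$. Then the density $\psi_\tau$ of $\mu_\tau=\mu_0\boxplus\lambda_\tau$ satisfies $\psi_\tau(x)=0$ for all $x>x^*_\tau$.
   Context: Assumption A: $\mu_0$ is a Borel probability measure on $\mathbb R$ with compact support and a continuous density $\psi_0$. Assumption B(b): there exist $x^*\in\operatorname{supp}(\mu_0)$, $c_0>0$, an integer $k\ge1$, a function $h$ real analytic near $x^*$ with $h(x^* )=1$ and $\epsilon>0$ with $\psi_0(s)=c_0^{2k+3/2}(x^*-s)^{2k+1/2}h(s)$ on $[x^*-\epsilon,x^*]$ and $\psi_0=0$ on $[x^*,x^*+\epsilon]$. $\lambda_\tau$ is the semicircle law with density $\frac{1}{2\pi\tau}\sqrt{4\tau-s^2}$ on $[-2\sqrt\tau,2\sqrt\tau]$, $\boxplus$ is free additive convolution, and $\tau_{\mathrm{crit}}=\left[\int\frac{d\mu_0(s)}{(x^*-s)^2}\right]^{-1}$. *)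

theory Defs
  imports "HOL-Analysis.Analysis" "HOL-Probability.Probability"
begin

definition measure_support :: "real measure \<Rightarrow> real set" where
  "measure_support M = {x. \<forall>e>0. emeasure M (ball x e) > 0}"

definition compact_prob :: "real measure \<Rightarrow> bool" where
  "compact_prob M \<longleftrightarrow> prob_space M \<and> sets M = sets borel \<and> compact (measure_support M)"

definition cauchy_transform :: "real measure \<Rightarrow> complex \<Rightarrow> complex" where
  "cauchy_transform M z = (\<integral>s. 1 / (z - complex_of_real s) \<partial>M)"

definition R_transform_on :: "real measure \<Rightarrow> (complex \<Rightarrow> complex) \<Rightarrow> real \<Rightarrow> bool" where
  "R_transform_on M R e \<longleftrightarrow> e > 0 \<and> R holomorphic_on ball 0 e \<and>
     (\<forall>w \<in> ball 0 e - {0}. cauchy_transform M (R w + 1 / w) = w)"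

definition is_free_add_conv :: "real measure \<Rightarrow> real measure \<Rightarrow> real measure \<Rightarrow> bool" where
  "is_free_add_conv \<rho> \<mu> \<nu> \<longleftrightarrow> compact_prob \<rho> \<and>
     (\<exists>e R\<^sub>\<mu> R\<^sub>\<nu> R\<^sub>\<rho>. R_transform_on \<mu> R\<^sub>\<mu> e \<and> R_transform_on \<nu> R\<^sub>\<nu> e \<and>
        R_transform_on \<rho> R\<^sub>\<rho> e \<and> (\<forall>w \<in> ball 0 e. R\<^sub>\<rho> w = R\<^sub>\<mu> w + R\<^sub>\<nu> w))"

definition semicircle :: "real \<Rightarrow> real measure" where
  "semicircle \<tau> = density lborel (\<lambda>s. ennreal (indicator {-2 * sqrt \<tau> .. 2 * sqrt \<tau>} s *
       sqrt (4 * \<tau> - s\<^sup>2) / (2 * pi * \<tau>)))"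

definition real_analytic_near :: "(real \<Rightarrow> real) \<Rightarrow> real \<Rightarrow> bool" where
  "real_analytic_near h x \<longleftrightarrow> (\<exists>\<delta>>0. \<exists>a::nat \<Rightarrow> real.
      \<forall>s \<in> ball x \<delta>. (\<lambda>n. a n * (s - x) ^ n) sums h s)"

end

theory Submission
  imports Defs "HOL-Complex_Analysis.Complex_Analysis"
begin

lemma norm_integral_const_bound:
  fixes f :: "'a \<Rightarrow> 'b::{banach,second_countable_topology}"
  assumes "finite_measure M" "AE x in M. norm (f x) \<le> B" "B \<ge> 0"
  shows "norm (integral\<^sup>L M f) \<le> B * measure M (space M)"
proof -
  interpret finite_measure M by fact
  have "norm (integral\<^sup>L M f) \<le> (\<integral>x. norm (f x) \<partial>M)" by (rule integral_norm_bound)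
  also have "\<dots> \<le> (\<integral>x. B \<partial>M)"
    using assms(2,3) by (intro integral_mono_AE') (auto elim: eventually_mono)
  also have "\<dots> = B * measure M (space M)" by simp
  finally show ?thesis .
qed

lemma integrable_bounded_borel:
  fixes f :: "real \<Rightarrow> 'b::{banach,second_countable_topology}"
  assumes "finite_measure M" "sets M = sets borel" "f \<in> borel_measurable borel"
    "AE x in M. norm (f x) \<le> B"
  shows "integrable M f"
proof -
  interpret finite_measure M by fact
  have "f \<in> borel_measurable M" using assms(2,3) measurable_cong_sets by blast
  then show ?thesis using assms(4) by (intro integrable_const_bound)
qed

lemma meas1: "(\<lambda>s. 1 / (z - complex_of_real s)) \<in> borel_measurable borel"
  by measurable

lemma meas2: "(\<lambda>s. 1 / (z - complex_of_real s)^2) \<in> borel_measurable borel"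
  by measurable

lemma meas3: "(\<lambda>s. 1 / ((z - complex_of_real s) * (w - complex_of_real s))) \<in> borel_measurable borel"
  by measurable
lemma meas4: "(\<lambda>s. (1 / (z - complex_of_real s) - 1 / (z0 - complex_of_real s)) / c
   + 1 / (z0 - complex_of_real s)^2) \<in> borel_measurable borel"
  by measurable

lemma meas5: "(\<lambda>s. c / ((z - complex_of_real s) * (z0 - complex_of_real s)^2)) \<in> borel_measurable borel"
  by measurable

lemma alg1:
  fixes a b :: complex
  assumes "a \<noteq> 0" "b \<noteq> 0" "a \<noteq> b"
  shows "(1/a - 1/b)/(a-b) + 1/b^2 = (a-b)/(a*b^2)"
proof -
  have "a - b \<noteq> 0" using assms by auto
  then show ?thesis using assms by (simp add: field_simps power2_eq_square)
qed

lemma ct_has_deriv: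
  assumes fin: "finite_measure M" and sb: "sets M = sets borel" and K: "compact K" "K \<noteq> {}"
    and AE: "AE s in M. s \<in> K" and z0: "z0 \<notin> complex_of_real ` K"
  shows "(cauchy_transform M has_field_derivative - (\<integral>s. 1/(z0 - complex_of_real s)^2 \<partial>M)) (at z0)"
proof -
  interpret finite_measure M by fact
  have mc: "\<And>f::real \<Rightarrow> complex. f \<in> borel_measurable borel \<Longrightarrow> f \<in> borel_measurable M"
    using sb measurable_cong_sets by blast
  define d where "d = infdist z0 (complex_of_real ` K)"
  have "compact (complex_of_real ` K)"
    using K(1) by (intro compact_continuous_image) (auto intro!: continuous_intros)
  hence "closed (complex_of_real ` K)" by (rule compact_imp_closed)
  hence dpos: "d > 0" unfolding d_def using K(2) z0 by (intro infdist_pos_not_in_closed) auto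
  have dle: "d \<le> cmod (z0 - of_real s)" if "s \<in> K" for s
    unfolding d_def using infdist_le[of "of_real s" "complex_of_real ` K" z0] that
    by (auto simp: dist_norm)
  have dle2: "d/2 \<le> cmod (z - of_real s)" if "s \<in> K" "cmod (z - z0) < d/2" for s z
  proof -
    have "z0 - of_real s = (z - of_real s) - (z - z0)" by simp
    then have "cmod (z0 - of_real s) \<le> cmod (z - of_real s) + cmod (z - z0)"
      by (metis norm_triangle_ineq4)
    then show ?thesis using dle[OF that(1)] that(2) by linarith
  qed
  have intg1: "integrable M (\<lambda>s. 1 / (z - complex_of_real s))" if "cmod (z - z0) < d/2" for z
  proof (rule integrable_bounded_borel[OF fin sb meas1, where B="2/d"])
    show "AE x in M. cmod (1 / (z - complex_of_real x)) \<le> 2 / d"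
      using AE
    proof (rule eventually_mono)
      fix s assume "s \<in> K"
      then have "d/2 \<le> cmod (z - of_real s)" using dle2 that by auto
      moreover have "0 < cmod (z - of_real s)" using calculation dpos by linarith
      ultimately show "cmod (1 / (z - complex_of_real s)) \<le> 2 / d"
        using dpos by (simp add: norm_divide field_simps)
    qed
  qed
  have intg2: "integrable M (\<lambda>s. 1 / (z0 - complex_of_real s)^2)"
  proof (rule integrable_bounded_borel[OF fin sb meas2, where B="1/d^2"])
    show "AE x in M. cmod (1 / (z0 - complex_of_real x)^2) \<le> 1/d^2"
      using AE
    proof (rule eventually_mono)
      fix s assume "s \<in> K"
      then have "d \<le> cmod (z0 - of_real s)" using dle by auto
      then have "d^2 \<le> cmod (z0 - of_real s)^2" using dpos by (intro power_mono) auto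
      moreover have "0 < cmod (z0 - of_real s)" using \<open>d \<le> _\<close> dpos by linarith
      then have "0 < cmod (z0 - of_real s)^2" by simp
      ultimately show "cmod (1 / (z0 - complex_of_real s)^2) \<le> 1/d^2"
        using dpos by (simp add: norm_divide norm_power field_simps)
    qed
  qed
  define C where "C = (2 / d^3) * measure M (space M)"
  have C0: "C \<ge> 0" unfolding C_def using dpos by simp
  have key: "norm ((cauchy_transform M z - cauchy_transform M z0) / (z - z0)
        - - (\<integral>s. 1/(z0 - complex_of_real s)^2 \<partial>M)) \<le> C * cmod (z - z0)"
    if z: "z \<noteq> z0" "cmod (z - z0) < d/2" for z
  proof -
    have i1: "integrable M (\<lambda>s. 1 / (z - complex_of_real s))" using intg1 z by auto
    have i0: "integrable M (\<lambda>s. 1 / (z0 - complex_of_real s))" using intg1[of z0] dpos by auto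
    have "(cauchy_transform M z - cauchy_transform M z0) / (z - z0)
        - - (\<integral>s. 1/(z0 - complex_of_real s)^2 \<partial>M)
        = (\<integral>s. (1 / (z - complex_of_real s) - 1 / (z0 - complex_of_real s)) / (z - z0)
              + 1/(z0 - complex_of_real s)^2 \<partial>M)"
      unfolding cauchy_transform_def
      using i1 i0 intg2 by (simp add: integral_diff integral_add integrable_diff)
    also have "\<dots> = (\<integral>s. (z - z0) / ((z - complex_of_real s) * (z0 - complex_of_real s)^2) \<partial>M)"
    proof (rule integral_cong_AE)
      show "AE s in M. (1 / (z - complex_of_real s) - 1 / (z0 - complex_of_real s)) / (z - z0)
              + 1/(z0 - complex_of_real s)^2
           = (z - z0) / ((z - complex_of_real s) * (z0 - complex_of_real s)^2)"
        using AE
      proof (rule eventually_mono)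
        fix s assume s: "s \<in> K"
        have a: "z - complex_of_real s \<noteq> 0" using dle2[OF s z(2)] dpos by auto
        have b: "z0 - complex_of_real s \<noteq> 0" using dle[OF s] dpos by auto
        have c: "z - z0 \<noteq> 0" using z by auto
        show "(1 / (z - complex_of_real s) - 1 / (z0 - complex_of_real s)) / (z - z0)
              + 1/(z0 - complex_of_real s)^2
           = (z - z0) / ((z - complex_of_real s) * (z0 - complex_of_real s)^2)"
          using alg1[of "z - complex_of_real s" "z0 - complex_of_real s"] a b c by simp
      qed
    qed (rule mc, rule meas4, rule mc, rule meas5)
    also have "norm \<dots> \<le> (cmod (z - z0) * (2 / d^3)) * measure M (space M)"
    proof (rule norm_integral_const_bound[OF fin])
      show "0 \<le> cmod (z - z0) * (2 / d ^ 3)" using dpos by simp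
      show "AE x in M. cmod ((z - z0) / ((z - complex_of_real x) * (z0 - complex_of_real x)\<^sup>2))
          \<le> cmod (z - z0) * (2 / d ^ 3)"
        using AE
      proof (rule eventually_mono)
        fix s assume s: "s \<in> K"
        have a: "d/2 \<le> cmod (z - complex_of_real s)" using dle2[OF s z(2)] by auto
        have b: "d \<le> cmod (z0 - complex_of_real s)" using dle[OF s] by auto
        have "d/2 * d^2 \<le> cmod (z - complex_of_real s) * cmod (z0 - complex_of_real s)^2"
          using a b dpos by (intro mult_mono power_mono) auto
        then have "d^3/2 \<le> cmod ((z - complex_of_real s) * (z0 - complex_of_real s)\<^sup>2)"
          by (simp add: norm_mult norm_power power3_eq_cube power2_eq_square)
        show "cmod ((z - z0) / ((z - complex_of_real s) * (z0 - complex_of_real s)\<^sup>2))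
          \<le> cmod (z - z0) * (2 / d ^ 3)"
        proof -
          have "cmod (z - z0) / cmod ((z - complex_of_real s) * (z0 - complex_of_real s)\<^sup>2)
              \<le> cmod (z - z0) / (d^3/2)"
            by (rule frac_le) (use dpos \<open>d^3/2 \<le> _\<close> in auto)
          then show ?thesis by (simp add: norm_divide)
        qed
      qed
    qed
    finally show ?thesis unfolding C_def by (simp add: mult_ac)
  qed
  show ?thesis
    unfolding has_field_derivative_iff
  proof (subst Lim_null, rule Lim_null_comparison)
    show "\<forall>\<^sub>F x in at z0. cmod ((cauchy_transform M x - cauchy_transform M z0) / (x - z0)
        - - (\<integral>s. 1/(z0 - complex_of_real s)^2 \<partial>M)) \<le> C * cmod (x - z0)"
      unfolding eventually_at using dpos key by (intro exI[of _ "d/2"]) (auto simp: dist_norm)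
    show "((\<lambda>x. C * cmod (x - z0)) \<longlongrightarrow> 0) (at z0)"
      by (rule tendsto_eq_intros refl | simp)+
  qed
qed

lemma AE_in_support:
  fixes M :: "real measure"
  assumes sb: "sets M = sets borel"
  shows "AE x in M. x \<in> measure_support M"
proof -
  define F where "F = {ball x e | x e. e > 0 \<and> emeasure M (ball x e) = 0}"
  have "\<And>S. S \<in> F \<Longrightarrow> open S" by (auto simp: F_def)
  then obtain F' where F': "F' \<subseteq> F" "countable F'" "\<Union>F' = \<Union>F" using Lindelof by metis
  have "(\<Union>S\<in>F'. S) \<in> null_sets M"
  proof (rule null_sets_UN')
    show "countable F'" by fact
    fix S assume "S \<in> F'"
    then have "S \<in> F" using F' by auto
    then obtain x e where S: "S = ball x e" "emeasure M (ball x e) = 0" by (auto simp: F_def)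
    have "S \<in> sets M" using sb S by auto
    then show "S \<in> null_sets M" using S by (auto intro: null_setsI)
  qed
  then have "AE x in M. x \<notin> \<Union>F'" by (intro AE_not_in) auto
  then show ?thesis
  proof (rule eventually_mono)
    fix x assume "x \<notin> \<Union>F'"
    then have nx: "x \<notin> \<Union>F" using F' by auto
    show "x \<in> measure_support M"
      unfolding measure_support_def
    proof (safe)
      fix e :: real assume "e > 0"
      show "emeasure M (ball x e) > 0"
      proof (rule ccontr)
        assume "\<not> emeasure M (ball x e) > 0"
        then have "emeasure M (ball x e) = 0" by (simp add: not_gr_zero)
        then have "ball x e \<in> F" using \<open>e > 0\<close> unfolding F_def by blast
        then show False using nx \<open>e > 0\<close> by auto
      qed
    qed
  qed
qed

lemma compact_prob_bound:
  assumes "compact_prob M"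
  obtains B where "B > 0" "AE x in M. \<bar>x\<bar> \<le> B"
proof -
  have sb: "sets M = sets borel" and c: "compact (measure_support M)"
    using assms unfolding compact_prob_def by auto
  obtain B where B: "B > 0" "\<And>x. x \<in> measure_support M \<Longrightarrow> norm x \<le> B"
    using compact_imp_bounded[OF c] unfolding bounded_pos by auto
  have "AE x in M. \<bar>x\<bar> \<le> B"
    using AE_in_support[OF sb] by (rule eventually_mono) (use B in auto)
  with B(1) show ?thesis using that by blast
qed

lemma ineq_P:
  fixes z1 z2 :: complex and s B :: real
  assumes "B > 0" "\<bar>s\<bar> \<le> B" "8*B \<le> cmod z1" "8*B \<le> cmod z2"
  shows "cmod (z1*z2/((z1 - of_real s)*(z2 - of_real s)) - 1) \<le> 1/2"
proof -
  define x y where "x = cmod z1" and "y = cmod z2"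
  have d1: "x - B \<le> cmod (z1 - of_real s)"
    using norm_triangle_ineq2[of z1 "of_real s"] assms(2) unfolding x_def by simp
  have d2: "y - B \<le> cmod (z2 - of_real s)"
    using norm_triangle_ineq2[of z2 "of_real s"] assms(2) unfolding y_def by simp
  have xp: "x - B > 0" "y - B > 0" using assms unfolding x_def y_def by auto
  have nz: "z1 - of_real s \<noteq> 0" "z2 - of_real s \<noteq> 0" using d1 d2 xp by auto
  have eq: "z1*z2/((z1 - of_real s)*(z2 - of_real s)) - 1
      = (of_real s * (z1 + z2) - (of_real s)^2) / ((z1 - of_real s)*(z2 - of_real s))"
  proof -
    have Dnz: "(z1 - of_real s)*(z2 - of_real s) \<noteq> 0" using nz by simp
    have "z1*z2/((z1 - of_real s)*(z2 - of_real s)) - 1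
       = (z1*z2 - (z1 - of_real s)*(z2 - of_real s))/((z1 - of_real s)*(z2 - of_real s))"
      using Dnz by (simp add: diff_divide_distrib)
    moreover have "z1*z2 - (z1 - of_real s)*(z2 - of_real s) = of_real s * (z1 + z2) - (of_real s)^2"
      by (simp add: algebra_simps power2_eq_square)
    ultimately show ?thesis by simp
  qed
  have num: "cmod (of_real s * (z1 + z2) - (of_real s)^2) \<le> B*(x+y) + B^2"
  proof -
    have "cmod (of_real s * (z1 + z2) - (of_real s)^2) \<le> cmod (of_real s * (z1 + z2)) + cmod ((of_real s)^2 :: complex)"
      by (rule norm_triangle_ineq4)
    also have "\<dots> = \<bar>s\<bar> * cmod (z1 + z2) + s^2" by (simp add: norm_mult norm_power)
    also have "\<dots> \<le> B * (x + y) + B^2"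
    proof (rule add_mono)
      show "\<bar>s\<bar> * cmod (z1 + z2) \<le> B * (x + y)"
        using assms(2) norm_triangle_ineq[of z1 z2] unfolding x_def y_def
        by (intro mult_mono) auto
      show "s^2 \<le> B^2" using assms(2) by (metis abs_le_square_iff abs_of_pos assms(1) less_le)
    qed
    finally show ?thesis .
  qed
  have den: "(x - B) * (y - B) \<le> cmod ((z1 - of_real s)*(z2 - of_real s))"
    using d1 d2 xp by (simp add: norm_mult) (intro mult_mono, auto)
  have key: "2 * (B*(x+y) + B^2) \<le> (x - B) * (y - B)"
  proof -
    have "5*B \<le> x - 3*B" "5*B \<le> y - 3*B" using assms unfolding x_def y_def by auto
    then have "(5*B)*(5*B) \<le> (x - 3*B)*(y - 3*B)" using assms(1) by (intro mult_mono) auto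
    moreover have bb: "0 \<le> B*B" by simp
    ultimately show ?thesis by (simp add: algebra_simps power2_eq_square) (use bb in linarith)
  qed
  have "cmod (z1*z2/((z1 - of_real s)*(z2 - of_real s)) - 1)
      = cmod (of_real s * (z1 + z2) - (of_real s)^2) / cmod ((z1 - of_real s)*(z2 - of_real s))"
    unfolding eq by (simp add: norm_divide)
  also have "\<dots> \<le> (B*(x+y) + B^2) / ((x - B) * (y - B))"
    by (rule frac_le) (use num den xp assms(1) in auto)
  also have "\<dots> \<le> 1/2"
    using key xp by (simp add: divide_le_eq)
  finally show ?thesis .
qed

lemma alg2:
  fixes a b z1 z2 :: complex
  assumes "a \<noteq> 0" "b \<noteq> 0" "z1 \<noteq> 0" "z2 \<noteq> 0" "b - a = z2 - z1"
  shows "1/a - 1/b = ((z2 - z1)/(z1*z2)) * (z1*z2/(a*b))"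
proof -
  have e1: "1/a - 1/b = (b - a)/(a*b)" using assms by (simp add: field_simps)
  have e2: "((z2 - z1)/(z1*z2)) * (z1*z2/(a*b)) = (z2 - z1)/(a*b)" using assms by (simp add: field_simps)
  show ?thesis by (simp only: e1 e2 assms(5))
qed

lemma ct_inj:
  fixes M :: "real measure"
  assumes fin: "finite_measure M" and sb: "sets M = sets borel" and AE: "AE s in M. \<bar>s\<bar> \<le> B"
    and B: "B > 0" and pos: "measure M (space M) > 0"
    and z1: "8*B \<le> cmod z1" and z2: "8*B \<le> cmod z2"
    and eq: "cauchy_transform M z1 = cauchy_transform M z2"
  shows "z1 = z2"
proof (rule ccontr)
  assume ne: "z1 \<noteq> z2"
  interpret finite_measure M by fact
  have lowb: "7*B \<le> cmod (z - of_real s)" if "8*B \<le> cmod z" "\<bar>s\<bar> \<le> B" for z s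
    using norm_triangle_ineq2[of z "of_real s"] that by simp
  have intg: "integrable M (\<lambda>s. 1/(z - complex_of_real s))" if "8*B \<le> cmod z" for z
  proof (rule integrable_bounded_borel[OF fin sb meas1, where B="1/(7*B)"])
    show "AE s in M. cmod (1 / (z - complex_of_real s)) \<le> 1/(7*B)"
      using AE
    proof (rule eventually_mono)
      fix s assume "\<bar>s\<bar> \<le> B"
      then have "7*B \<le> cmod (z - of_real s)" using lowb that by auto
      moreover have "0 < 7*B" using B by simp
      ultimately show "cmod (1 / (z - complex_of_real s)) \<le> 1/(7*B)"
        by (simp add: norm_divide divide_le_eq)
    qed
  qed
  define P where "P s = z1*z2/((z1 - complex_of_real s)*(z2 - complex_of_real s))" for s
  define c where "c = (z2 - z1)/(z1*z2)"
  have z1nz: "z1 \<noteq> 0" and z2nz: "z2 \<noteq> 0" using z1 z2 B by auto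
  have cnz: "c \<noteq> 0" unfolding c_def using ne z1nz z2nz by simp
  have "0 = cauchy_transform M z1 - cauchy_transform M z2" using eq by simp
  also have "\<dots> = (\<integral>s. 1/(z1 - complex_of_real s) - 1/(z2 - complex_of_real s) \<partial>M)"
    unfolding cauchy_transform_def using intg z1 z2 by (simp add: integral_diff)
  also have "\<dots> = (\<integral>s. c * P s \<partial>M)"
  proof (rule integral_cong_AE)
    show "AE s in M. 1/(z1 - complex_of_real s) - 1/(z2 - complex_of_real s) = c * P s"
      using AE
    proof (rule eventually_mono)
      fix s assume s: "\<bar>s\<bar> \<le> B"
      have "z1 - complex_of_real s \<noteq> 0" "z2 - complex_of_real s \<noteq> 0"
        using lowb[OF z1 s] lowb[OF z2 s] B by auto
      then show "1/(z1 - complex_of_real s) - 1/(z2 - complex_of_real s) = c * P s"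
        unfolding c_def P_def using z1nz z2nz by (intro alg2) auto
    qed
    have "(\<lambda>s. c * P s) \<in> borel_measurable borel" unfolding P_def by measurable
    then show "(\<lambda>s. c * P s) \<in> borel_measurable M" using sb measurable_cong_sets by blast
    have "(\<lambda>s. 1/(z1 - complex_of_real s) - 1/(z2 - complex_of_real s)) \<in> borel_measurable borel"
      by measurable
    then show "(\<lambda>s. 1/(z1 - complex_of_real s) - 1/(z2 - complex_of_real s)) \<in> borel_measurable M"
      using sb measurable_cong_sets by blast
  qed
  also have "\<dots> = c * (\<integral>s. P s \<partial>M)" by simp
  finally have P0: "(\<integral>s. P s \<partial>M) = 0" using cnz by simp
  have mP: "(\<lambda>s. Re (P s)) \<in> borel_measurable borel" unfolding P_def by measurable
  have ReP: "AE s in M. 1/2 \<le> Re (P s) \<and> \<bar>Re (P s)\<bar> \<le> 2 \<and> cmod (P s) \<le> 2"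
    using AE
  proof (rule eventually_mono)
    fix s assume s: "\<bar>s\<bar> \<le> B"
    have "cmod (P s - 1) \<le> 1/2" unfolding P_def by (rule ineq_P[OF B s z1 z2])
    moreover have "\<bar>Re (P s - 1)\<bar> \<le> cmod (P s - 1)" by (rule abs_Re_le_cmod)
    moreover have "cmod (P s) \<le> cmod (P s - 1) + 1" using norm_triangle_ineq2[of "P s" 1] by simp
    ultimately show "1/2 \<le> Re (P s) \<and> \<bar>Re (P s)\<bar> \<le> 2 \<and> cmod (P s) \<le> 2" by auto
  qed
  have iR: "integrable M (\<lambda>s. Re (P s))"
    by (rule integrable_bounded_borel[OF fin sb mP, where B=2]) (use ReP in \<open>auto elim: eventually_mono\<close>)
  have "(\<integral>s. 1/2 \<partial>M) \<le> (\<integral>s. Re (P s) \<partial>M)"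
    by (rule integral_mono_AE) (use iR ReP in \<open>auto elim: eventually_mono\<close>)
  also have "\<dots> = Re (\<integral>s. P s \<partial>M)"
  proof -
    have mP2: "P \<in> borel_measurable borel" unfolding P_def by measurable
    have "integrable M P"
      by (rule integrable_bounded_borel[OF fin sb mP2, where B=2]) (use ReP in \<open>auto elim: eventually_mono\<close>)
    then show ?thesis by (simp add: integral_Re)
  qed
  also have "\<dots> = 0" using P0 by simp
  finally show False using pos by simp
qed

lemma semi_g_identity:
  fixes a z s c :: real
  assumes a: "0 < a" and zs: "z - s \<noteq> 0" and c2: "c^2 = z^2 - a^2"
  shows "1 - ((c^2/(z - s) - z)/a)^2 = c^2 * (a^2 - s^2) / (a^2 * (z - s)^2)"
proof -
  have Y: "(a*(z-s))^2 \<noteq> 0" using a zs by simp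
  have e0: "c^2/(z - s) - z = (c^2 - z*(z-s))/(z-s)" using zs by (simp add: diff_divide_distrib)
  have e: "(c^2/(z - s) - z)/a = (c^2 - z*(z-s)) / (a*(z-s))"
    unfolding e0 by (simp add: divide_divide_eq_left mult.commute)
  have gen: "1 - (X/Y)^2 = (Y^2 - X^2)/Y^2" if "Y^2 \<noteq> 0" for X Y :: real
    using that by (simp add: field_simps)
  have "1 - ((c^2 - z*(z-s)) / (a*(z-s)))^2 = ((a*(z-s))^2 - (c^2 - z*(z-s))^2)/(a*(z-s))^2"
    by (rule gen[OF Y])
  also have "(a*(z-s))^2 - (c^2 - z*(z-s))^2 = c^2 * (a^2 - s^2)"
    unfolding c2 by (simp add: algebra_simps power2_eq_square)
  also have "(a*(z-s))^2 = a^2 * (z - s)^2" by (simp add: power_mult_distrib)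
  finally show ?thesis unfolding e .
qed

lemma semi_deriv_alg:
  fixes a z s c r :: real
  assumes r: "r > 0" "r^2 = a^2 - s^2" and zs: "z - s > 0" and c2: "c^2 = z^2 - a^2"
  shows "z * (1/r) - (- s / r) - c * (c / ((z - s) * r)) = r / (z - s)"
proof -
  have "z * (1/r) - (- s / r) - c * (c / ((z - s) * r)) = ((z + s)*(z - s) - c^2) / ((z - s) * r)"
    using r zs by (simp add: field_simps power2_eq_square)
  also have "(z + s)*(z - s) - c^2 = r^2" unfolding c2 r(2) by (simp add: algebra_simps power2_eq_square)
  also have "r^2 / ((z - s) * r) = r / (z - s)" using r(1) zs by (simp add: field_simps power2_eq_square)
  finally show ?thesis .
qed

lemma alg3:
  fixes c r a u :: real
  assumes "c > 0" "r > 0" "a > 0" "u > 0"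
  shows "inverse (c*r/(a*u)) * (c^2/(a*u^2)) = c/(u*r)"
  using assms by (simp add: field_simps power2_eq_square)

lemma semi_ftc:
  fixes a z :: real
  assumes a: "0 < a" and az: "a < z"
  shows "((\<lambda>s. sqrt (a^2 - s^2) / (z - s)) has_integral (pi * (z - sqrt (z^2 - a^2)))) {-a..a}"
proof -
  define c where "c = sqrt (z^2 - a^2)"
  have c2: "c^2 = z^2 - a^2" unfolding c_def using a az
    by (intro real_sqrt_pow2) (simp add: abs_le_square_iff less_imp_le power_mono)
  have cpos: "c > 0" unfolding c_def using a az by (simp add: power_strict_mono)
  define g where "g s = (c^2/(z - s) - z)/a" for s
  define \<Phi> where "\<Phi> s = z * arcsin (s/a) - sqrt (a^2 - s^2) - c * arcsin (g s)" for s
  have g1: "1 - (g s)^2 = c^2 * (a^2 - s^2) / (a^2 * (z - s)^2)" if "s \<le> a" for s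
    unfolding g_def using that az a c2 by (intro semi_g_identity) auto
  have gle: "\<bar>g s\<bar> \<le> 1" if "-a \<le> s" "s \<le> a" for s
  proof -
    have "a^2 - s^2 \<ge> 0" using that a abs_le_square_iff[of s a] by auto
    then have "0 \<le> c^2 * (a^2 - s^2) / (a^2 * (z - s)^2)" by simp
    then have "(g s)^2 \<le> 1" using g1[OF that(2)] by simp
    then show ?thesis by (simp add: abs_square_le_1)
  qed
  have sle: "\<bar>s/a\<bar> \<le> 1" if "-a \<le> s" "s \<le> a" for s
    using that a by (simp add: abs_le_iff divide_le_eq_1 )
  have cont: "continuous_on {-a..a} \<Phi>"
    unfolding \<Phi>_def g_def
  proof (intro continuous_intros ballI)
    fix s assume "s \<in> {-a..a}"
    then show "-1 \<le> s/a \<and> s/a \<le> 1" using a by (auto simp: le_divide_eq divide_le_eq)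
    have h: "-1 \<le> g s \<and> g s \<le> 1" using gle[of s] \<open>s \<in> _\<close> by (simp add: abs_le_iff)
    then show "-1 \<le> (c^2/(z - s) - z)/a \<and> (c^2/(z - s) - z)/a \<le> 1" unfolding g_def .
    show "z - s \<noteq> 0" using \<open>s \<in> _\<close> az by auto
  qed (use a in auto)
  have deriv: "(\<Phi> has_real_derivative sqrt (a^2 - s^2) / (z - s)) (at s)" if s: "-a < s" "s < a" for s
  proof -
    define r where "r = sqrt (a^2 - s^2)"
    have "\<bar>s\<bar> < a" using s by auto
    then have "\<bar>s\<bar>^2 < a^2" by (intro power_strict_mono) auto
    then have sa2: "s^2 < a^2" by simp
    have rpos: "r > 0" unfolding r_def using sa2 by simp
    have r2: "r^2 = a^2 - s^2" unfolding r_def using sa2 by simp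
    have zs: "z - s > 0" using s az by auto
    have D1: "((\<lambda>s. arcsin (s/a)) has_real_derivative 1/r) (at s)"
    proof -
      have "-1 < s/a" "s/a < 1" using s a by (auto simp: field_simps)
      then have d: "DERIV arcsin (s/a) :> inverse (sqrt (1 - (s/a)^2))" by (rule DERIV_arcsin)
      have l: "((\<lambda>s. s/a) has_real_derivative 1/a) (at s)"
        using a by (auto intro!: derivative_eq_intros)
      have "1 - (s/a)^2 = (a^2 - s^2)/a^2" using a by (simp add: field_simps power2_eq_square)
      then have "sqrt (1 - (s/a)^2) = r / a" unfolding r_def using a by (simp add: real_sqrt_divide)
      then have "inverse (sqrt (1 - (s/a)^2)) * (1/a) = 1/r" using a rpos by (simp add: field_simps)
      then show ?thesis using DERIV_chain'[OF l d] by simp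
    qed
    have D2: "((\<lambda>s. sqrt (a^2 - s^2)) has_real_derivative (- s / r)) (at s)"
    proof -
      have d: "DERIV sqrt (a^2 - s^2) :> inverse (sqrt (a^2 - s^2)) / 2" using sa2 by (intro DERIV_real_sqrt) simp
      have l: "DERIV (\<lambda>x. a^2 - x^2) s :> (-2 * s)"
        by (auto intro!: derivative_eq_intros)
      have "inverse (sqrt (a^2 - s^2)) / 2 * (-2 * s) = - s / r" unfolding r_def by (simp add: field_simps)
      then show ?thesis using DERIV_chain'[OF l d] by simp
    qed
    have D3: "((\<lambda>s. arcsin (g s)) has_real_derivative c / ((z - s) * r)) (at s)"
    proof -
      have eq1: "1 - (g s)^2 = (c * r / (a * (z - s)))^2"
        using g1[of s] s r2 by (simp add: power_mult_distrib power_divide)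
      have pos: "c * r / (a * (z - s)) > 0" using cpos rpos a zs by simp
      have "(g s)^2 < 1" using eq1 pos by (smt (verit) zero_less_power)
      then have "-1 < g s" "g s < 1" by (auto simp: abs_square_less_1)
      then have d: "DERIV arcsin (g s) :> inverse (sqrt (1 - (g s)^2))" by (rule DERIV_arcsin)
      have l1: "DERIV (\<lambda>x. c^2/(z - x)) s :> c^2/(z - s)^2"
        using zs by (auto intro!: derivative_eq_intros simp: power2_eq_square)
      have "DERIV (\<lambda>x. (c^2/(z - x) - z)/a) s :> (c^2/(z - s)^2 - 0)/a"
        by (intro DERIV_cdivide DERIV_diff l1 DERIV_const)
      then have l: "(g has_real_derivative c^2 / (a * (z - s)^2)) (at s)"
        unfolding g_def by (rule DERIV_cong) simp
      have sq: "sqrt (1 - (g s)^2) = c * r / (a * (z - s))"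
        unfolding eq1 real_sqrt_abs using pos by (simp only: abs_of_pos)
      have "inverse (sqrt (1 - (g s)^2)) * (c^2 / (a * (z - s)^2)) = c / ((z - s) * r)"
        unfolding sq using alg3[OF cpos rpos a zs] .
      then show ?thesis using DERIV_chain'[OF l d] by simp
    qed
    have "(\<Phi> has_real_derivative z * (1/r) - (- s / r) - c * (c / ((z - s) * r))) (at s)"
      unfolding \<Phi>_def by (intro DERIV_diff DERIV_cmult D1 D2 D3)
    then show ?thesis
      by (rule DERIV_cong) (use semi_deriv_alg[OF rpos r2 zs c2] r_def in simp)
  qed
  have "((\<lambda>s. sqrt (a^2 - s^2) / (z - s)) has_integral (\<Phi> a - \<Phi> (-a))) {-a..a}"
    using a cont deriv
    by (intro fundamental_theorem_of_calculus_interior)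
       (auto simp: has_real_derivative_iff_has_vector_derivative[symmetric])
  moreover have "g a = 1" unfolding g_def
  proof -
    have "c^2/(z - a) = z + a" using az c2 by (simp add: field_simps power2_eq_square)
    then show "(c^2/(z - a) - z)/a = 1" using a by simp
  qed
  moreover have "g (-a) = -1" unfolding g_def
  proof -
    have "c^2/(z + a) = z - a" using az a c2 by (simp add: field_simps power2_eq_square)
    then show "(c^2/(z - -a) - z)/a = -1" using a by simp
  qed
  ultimately show ?thesis unfolding \<Phi>_def c_def[symmetric] using a
    by (simp add: algebra_simps)
qed

lemma semi_lborel:
  fixes a z :: real
  assumes a: "0 < a" and az: "a < z"
  shows "integral\<^sup>L lborel (\<lambda>s. indicator {-a..a} s *\<^sub>R (sqrt (a^2 - s^2) / (z - s)))
       = pi * (z - sqrt (z^2 - a^2))"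
proof -
  let ?f = "\<lambda>s. sqrt (a^2 - s^2) / (z - s)"
  have cf: "continuous_on {-a..a} ?f"
    using az by (intro continuous_intros) auto
  have "((\<lambda>s. indicator {-a..a} s *\<^sub>R ?f s) has_integral
      (integral\<^sup>L lborel (\<lambda>s. indicator {-a..a} s *\<^sub>R ?f s))) UNIV"
    using borel_integrable_atLeastAtMost'[OF cf]
    unfolding set_integrable_def by (rule has_integral_integral_lborel)
  moreover
  have "(?f has_integral pi * (z - sqrt (z^2 - a^2))) {-a..a}" by (rule semi_ftc[OF a az])
  then have "((\<lambda>s. indicator {-a..a} s *\<^sub>R ?f s) has_integral pi * (z - sqrt (z^2 - a^2))) {-a..a}"
    by (subst has_integral_cong[where g="?f"]) auto
  then have "((\<lambda>s. indicator {-a..a} s *\<^sub>R ?f s) has_integral pi * (z - sqrt (z^2 - a^2))) UNIV"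
    by (intro has_integral_on_superset[where T=UNIV and S="{-a..a}"]) auto
  ultimately show ?thesis by (rule has_integral_unique)
qed

lemma semi_facts:
  fixes \<tau> :: real
  assumes tau: "\<tau> > 0"
  shows semi_sets: "sets (semicircle \<tau>) = sets borel"
    and semi_AE: "AE s in semicircle \<tau>. s \<in> {-2* sqrt \<tau>..2* sqrt \<tau>}"
    and semi_fin: "finite_measure (semicircle \<tau>)"
    and semi_ct: "\<And>z. z > 2* sqrt \<tau> \<Longrightarrow> cauchy_transform (semicircle \<tau>) (of_real z)
          = of_real ((z - sqrt (z^2 - 4*\<tau>))/(2*\<tau>))"
proof -
  define a where "a = 2 * sqrt \<tau>"
  have apos: "a > 0" unfolding a_def using tau by simp
  have a2: "a^2 = 4*\<tau>" unfolding a_def using tau by (simp add: power_mult_distrib)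
  define d where "d s = indicator {-a..a} s * sqrt (4 * \<tau> - s\<^sup>2) / (2 * pi * \<tau>)" for s :: real
  have sc: "semicircle \<tau> = density lborel (\<lambda>s. ennreal (d s))"
    unfolding semicircle_def d_def a_def by simp
  have dm[measurable]: "d \<in> borel_measurable borel" unfolding d_def by measurable
  have dnn: "d s \<ge> 0" for s
  proof (cases "s \<in> {-a..a}")
    case True
    then have "s^2 \<le> a^2" using abs_le_square_iff[of s a] apos by auto
    then show ?thesis unfolding d_def using tau True a2 by simp
  next
    case False
    then show ?thesis unfolding d_def by simp
  qed
  show "sets (semicircle \<tau>) = sets borel" unfolding sc by simp
  show "AE s in semicircle \<tau>. s \<in> {-2* sqrt \<tau>..2* sqrt \<tau>}"
    unfolding sc
  proof (subst AE_density)
    show "(\<lambda>s. ennreal (d s)) \<in> borel_measurable lborel" by measurable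
    show "AE x in lborel. 0 < ennreal (d x) \<longrightarrow> x \<in> {-2* sqrt \<tau>..2* sqrt \<tau>}"
      by (intro AE_I2) (auto simp: d_def a_def indicator_def)
  qed
  show fin: "finite_measure (semicircle \<tau>)"
  proof
    have "emeasure (semicircle \<tau>) (space (semicircle \<tau>)) = (\<integral>\<^sup>+ x. ennreal (d x) \<partial>lborel)"
      unfolding sc by (simp add: emeasure_density)
    also have "\<dots> \<le> (\<integral>\<^sup>+ x. ennreal (a / (2*pi*\<tau>)) * indicator {-a..a} x \<partial>lborel)"
    proof (rule nn_integral_mono)
      fix x :: real
      show "ennreal (d x) \<le> ennreal (a / (2*pi*\<tau>)) * indicator {-a..a} x"
      proof (cases "x \<in> {-a..a}")
        case True
        have "sqrt (4 * \<tau> - x^2) \<le> sqrt (4 * \<tau>)" by (intro real_sqrt_le_mono) simp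
        also have "sqrt (4 * \<tau>) = a" unfolding a_def by (simp add: real_sqrt_mult)
        finally have "d x \<le> a / (2*pi*\<tau>)" unfolding d_def using True tau
          by (simp add: divide_right_mono)
        then show ?thesis using True by (simp add: ennreal_leI)
      next
        case False
        then show ?thesis by (simp add: d_def)
      qed
    qed
    also have "\<dots> = ennreal (a / (2*pi*\<tau>)) * emeasure lborel {-a..a}"
      by (rule nn_integral_cmult_indicator) simp
    also have "\<dots> < \<infinity>" using apos by (simp add: ennreal_mult_less_top)
    finally show "emeasure (semicircle \<tau>) (space (semicircle \<tau>)) \<noteq> \<infinity>" by simp
  qed
  fix z :: real assume z: "z > 2* sqrt \<tau>"
  then have az: "a < z" unfolding a_def .
  have "cauchy_transform (semicircle \<tau>) (of_real z) = (\<integral>s. complex_of_real (1/(z - s)) \<partial>semicircle \<tau>)"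
    unfolding cauchy_transform_def by simp
  also have "\<dots> = of_real (\<integral>s. 1/(z - s) \<partial>semicircle \<tau>)" by (rule integral_complex_of_real)
  also have "(\<integral>s. 1/(z - s) \<partial>semicircle \<tau>) = (\<integral>s. d s *\<^sub>R (1/(z - s)) \<partial>lborel)"
    unfolding sc by (rule integral_density) (auto simp: dnn)
  also have "\<dots> = (\<integral>s. indicator {-a..a} s *\<^sub>R (sqrt (a^2 - s^2) / (z - s)) / (2*pi*\<tau>) \<partial>lborel)"
    by (rule Bochner_Integration.integral_cong) (auto simp: d_def a2 indicator_def)
  also have "\<dots> = (\<integral>s. indicator {-a..a} s *\<^sub>R (sqrt (a^2 - s^2) / (z - s)) \<partial>lborel) / (2*pi*\<tau>)"
    by (rule integral_divide_zero)
  also have "\<dots> = pi * (z - sqrt (z^2 - a^2)) / (2*pi*\<tau>)"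
    by (simp only: semi_lborel[OF apos az])
  also have "\<dots> = (z - sqrt (z^2 - 4*\<tau>))/(2*\<tau>)" unfolding a2 by simp
  finally show "cauchy_transform (semicircle \<tau>) (of_real z) = of_real ((z - sqrt (z^2 - 4*\<tau>))/(2*\<tau>))" .
qed

lemma cover_intervals:
  fixes c d y :: real and N :: nat
  assumes "c < d" "N \<ge> 1" "y = (d - c) / (2 * N)"
  shows "{c..d} \<subseteq> (\<Union>j<N. {c + 2 * j * y .. c + 2 * (j+1) * y})"
proof
  fix x assume x: "x \<in> {c..d}"
  have ypos: "y > 0" using assms by simp
  have dN: "d = c + 2 * N * y" using assms by simp
  define t where "t = (x - c) / (2 * y)"
  have t0: "0 \<le> t" and tN: "t \<le> N" using x ypos unfolding t_def dN by (auto simp: field_simps)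
  show "x \<in> (\<Union>j<N. {c + 2 * j * y .. c + 2 * (j+1) * y})"
  proof (cases "t = N")
    case True
    then have "x = c + 2 * N * y" unfolding t_def using ypos by (simp add: field_simps)
    moreover have "N - 1 < N" using assms by simp
    moreover have "real (N - 1) + 1 = N" using assms by simp
    ultimately show ?thesis using ypos
      by (intro UN_I[of "N - 1"]) (auto simp: algebra_simps)
  next
    case False
    define j where "j = nat \<lfloor>t\<rfloor>"
    have j1: "real j \<le> t" "t < real j + 1" unfolding j_def using t0 by linarith+
    have jN: "j < N" using j1 tN False by linarith
    have "c + 2 * j * y \<le> x" using j1(1) ypos unfolding t_def by (simp add: field_simps)
    moreover have "x \<le> c + 2 * (j+1) * y" using j1(2) ypos unfolding t_def by (simp add: field_simps)
    ultimately show ?thesis using jN by auto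
  qed
qed

lemma Im_ct_lower:
  fixes M :: "real measure"
  assumes fin: "finite_measure M" and sb: "sets M = sets borel" and y: "y > 0"
  shows "measure M {x - y..x + y} / (2*y) \<le> - Im (cauchy_transform M (Complex x y))"
proof -
  interpret finite_measure M by fact
  define f where "f s = y / ((x - s)^2 + y^2)" for s
  have Imf: "Im (1 / (Complex x y - complex_of_real s)) = - f s" for s
    unfolding f_def by (simp add: Im_divide power2_eq_square)
  have mf: "f \<in> borel_measurable borel" unfolding f_def by measurable
  have fb: "\<bar>f s\<bar> \<le> 1/y" for s
  proof -
    have "y^2 \<le> (x - s)^2 + y^2" by simp
    moreover have "0 < ((x - s)^2 + y^2) * y^2" using y by (intro mult_pos_pos add_nonneg_pos) auto
    ultimately have "y / ((x - s)^2 + y^2) \<le> y / y^2" using y by (intro divide_left_mono) auto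
    then show ?thesis unfolding f_def using y by (simp add: power2_eq_square)
  qed
  have intf: "integrable M f"
    by (rule integrable_bounded_borel[OF fin sb mf, where B="1/y"]) (use fb in auto)
  have mc: "(\<lambda>s. 1 / (Complex x y - complex_of_real s)) \<in> borel_measurable borel" by (rule meas1)
  have intc: "integrable M (\<lambda>s. 1 / (Complex x y - complex_of_real s))"
  proof (rule integrable_bounded_borel[OF fin sb mc, where B="1/y"])
    show "AE s in M. cmod (1 / (Complex x y - complex_of_real s)) \<le> 1/y"
    proof (rule AE_I2)
      fix s
      have "y \<le> cmod (Complex x y - complex_of_real s)"
        using abs_Im_le_cmod[of "Complex x y - complex_of_real s"] y by simp
      then show "cmod (1 / (Complex x y - complex_of_real s)) \<le> 1/y"
        using y by (simp add: norm_divide divide_le_eq)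
    qed
  qed
  have "- Im (cauchy_transform M (Complex x y)) = (\<integral>s. f s \<partial>M)"
    unfolding cauchy_transform_def using intc by (simp add: integral_Im[symmetric] Imf)
  also have "(\<integral>s. indicator {x - y..x + y} s * (1/(2*y)) \<partial>M) \<le> \<dots>"
  proof (rule integral_mono)
    show "integrable M (\<lambda>s. indicator {x - y..x + y} s * (1/(2*y)))"
    proof (rule integrable_bounded_borel[OF fin sb, where B="1/(2*y)"])
      show "(\<lambda>s. indicator {x - y..x + y} s * (1/(2*y))) \<in> borel_measurable borel" by measurable
      show "AE s in M. norm (indicator {x - y..x + y} s * (1/(2*y))) \<le> 1/(2*y)"
        using y by (intro AE_I2) (auto simp: indicator_def)
    qed
    show "integrable M f" by fact
    fix s assume "s \<in> space M"
    show "indicator {x - y..x + y} s * (1/(2*y)) \<le> f s"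
    proof (cases "s \<in> {x - y..x + y}")
      case True
      then have "\<bar>x - s\<bar> \<le> \<bar>y\<bar>" using y by auto
      then have "(x - s)^2 \<le> y^2" by (simp add: abs_le_square_iff)
      moreover have "0 < ((x - s)^2 + y^2) * (2*y^2)" using y by (intro mult_pos_pos add_nonneg_pos) auto
      ultimately have "y / (2*y^2) \<le> f s" unfolding f_def using y by (intro divide_left_mono) auto
      then show ?thesis using True y by (simp add: power2_eq_square)
    next
      case False
      have "0 \<le> f s" unfolding f_def using y by simp
      then show ?thesis using False by simp
    qed
  qed
  moreover have "(\<integral>s. indicator {x - y..x + y} s * (1/(2*y)) \<partial>M) = measure M {x - y..x + y} / (2*y)"
    using sb by simp
  moreover have "space M = UNIV" using sets_eq_imp_space_eq[OF sb] by simp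
  ultimately show ?thesis by simp
qed

lemma no_mass:
  fixes M :: "real measure"
  assumes fin: "finite_measure M" and sb: "sets M = sets borel"
    and bd: "\<And>x \<eta>. x > x0 \<Longrightarrow> \<eta> > 0 \<Longrightarrow> \<exists>\<delta>>0. \<forall>w. 0 < Im w \<longrightarrow> cmod (w - of_real x) < \<delta>
               \<longrightarrow> \<bar>Im (cauchy_transform M w)\<bar> < \<eta>"
  shows "emeasure M {x0<..} = 0"
proof (rule ccontr)
  assume ne: "emeasure M {x0<..} \<noteq> 0"
  interpret finite_measure M by fact
  have sp: "space M = UNIV" using sets_eq_imp_space_eq[OF sb] by simp
  define N where "N n = {x0 + 1/Suc n .. x0 + 1 + Suc n}" for n :: nat
  have UN: "{x0<..} = (\<Union>n. N n)"
  proof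
    show "(\<Union>n. N n) \<subseteq> {x0<..}" unfolding N_def by (auto simp: less_le_trans[of x0 "x0 + 1/Suc _"])
    show "{x0<..} \<subseteq> (\<Union>n. N n)"
    proof
      fix x assume "x \<in> {x0<..}"
      then have xp: "x - x0 > 0" by simp
      obtain n1 where n1: "inverse (real (Suc n1)) < x - x0" using reals_Archimedean[OF xp] by blast
      obtain n2 :: nat where n2: "x - x0 \<le> n2" using real_arch_simple by blast
      define n where "n = max n1 n2"
      have "1/real (Suc n) \<le> 1/real (Suc n1)" unfolding n_def by (intro divide_left_mono) auto
      then have "x0 + 1/Suc n \<le> x" using n1 by (simp add: inverse_eq_divide)
      moreover have "x \<le> x0 + 1 + Suc n" using n2 unfolding n_def by (simp add: le_max_iff_disj)
      ultimately show "x \<in> (\<Union>n. N n)" unfolding N_def by auto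
    qed
  qed
  have "\<exists>n. emeasure M (N n) \<noteq> 0"
  proof (rule ccontr)
    assume "\<not> (\<exists>n. emeasure M (N n) \<noteq> 0)"
    then have "\<And>n. emeasure M (N n) = 0" by blast
    then have "emeasure M (\<Union>n. N n) = 0" using sb by (intro emeasure_UN_eq_0) (auto simp: N_def)
    then show False using ne UN by simp
  qed
  then obtain n where nn: "emeasure M (N n) \<noteq> 0" by blast
  define c where "c = x0 + 1/Suc n"
  define d where "d = x0 + 1 + Suc n"
  have cx0: "c > x0" unfolding c_def by simp
  have cd: "c < d" unfolding c_def d_def
  proof -
    have "1/real (Suc n) \<le> 1" by simp
    moreover have "0 < real (Suc n)" by simp
    ultimately show "x0 + 1 / real (Suc n) < x0 + 1 + real (Suc n)" by linarith
  qed
  define m where "m = measure M {c..d}"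
  have mpos: "m > 0"
  proof -
    have "emeasure M {c..d} \<noteq> 0" using nn unfolding N_def c_def d_def .
    then have "measure M {c..d} \<noteq> 0" by (simp add: emeasure_eq_measure)
    then show ?thesis unfolding m_def using measure_nonneg[of M "{c..d}"] by linarith
  qed
  define \<eta> where "\<eta> = m / (2 * (d - c))"
  have etapos: "\<eta> > 0" unfolding \<eta>_def using mpos cd by simp
  have "\<forall>x\<in>{c..d}. \<exists>\<delta>>0. \<forall>w. 0 < Im w \<longrightarrow> cmod (w - of_real x) < \<delta> \<longrightarrow> \<bar>Im (cauchy_transform M w)\<bar> < \<eta>"
    using bd cx0 etapos by auto
  then obtain \<delta> where \<delta>: "\<And>x. x \<in> {c..d} \<Longrightarrow> \<delta> x > 0"
      "\<And>x w. x \<in> {c..d} \<Longrightarrow> 0 < Im w \<Longrightarrow> cmod (w - of_real x) < \<delta> x \<Longrightarrow> \<bar>Im (cauchy_transform M w)\<bar> < \<eta>"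
    by metis
  have cS: "compact (complex_of_real ` {c..d})"
    by (intro compact_continuous_image) (auto intro!: continuous_intros)
  obtain \<epsilon> where \<epsilon>: "0 < \<epsilon>" "\<And>p. p \<in> complex_of_real ` {c..d} \<Longrightarrow>
      \<exists>G \<in> (\<lambda>x. ball (complex_of_real x) (\<delta> x)) ` {c..d}. ball p \<epsilon> \<subseteq> G"
  proof (rule Heine_Borel_lemma[OF cS])
    show "complex_of_real ` {c..d} \<subseteq> \<Union> ((\<lambda>x. ball (complex_of_real x) (\<delta> x)) ` {c..d})"
      using \<delta>(1) by force
  qed auto
  have good: "\<bar>Im (cauchy_transform M w)\<bar> < \<eta>"
    if x: "x \<in> {c..d}" and w: "0 < Im w" "cmod (w - of_real x) < \<epsilon>" for x w
  proof -
    obtain x' where x': "x' \<in> {c..d}" "ball (complex_of_real x) \<epsilon> \<subseteq> ball (complex_of_real x') (\<delta> x')"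
      using \<epsilon>(2)[of "complex_of_real x"] x by auto
    have "w \<in> ball (complex_of_real x) \<epsilon>" using w(2) by (simp add: dist_norm norm_minus_commute)
    then have "w \<in> ball (complex_of_real x') (\<delta> x')" using x' by auto
    then have "cmod (w - of_real x') < \<delta> x'" by (simp add: dist_norm norm_minus_commute)
    then show ?thesis using \<delta>(2)[OF x'(1) w(1)] by simp
  qed
  obtain Nn :: nat where Nn: "(d - c)/\<epsilon> < Nn" using reals_Archimedean2 by blast
  have Nn1: "Nn \<ge> 1"
  proof -
    have "0 < (d - c)/\<epsilon>" using cd \<epsilon>(1) by simp
    then show ?thesis using Nn by (cases Nn) auto
  qed
  define y where "y = (d - c) / (2 * Nn)"
  have ypos: "y > 0" unfolding y_def using cd Nn1 by simp
  have yeps: "y < \<epsilon>"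
  proof -
    have "d - c < \<epsilon> * Nn" using Nn \<epsilon>(1) by (simp add: field_simps)
    moreover have "\<epsilon> * Nn \<le> \<epsilon> * (Nn * 2)" using \<epsilon>(1) by simp
    ultimately have "d - c < \<epsilon> * (Nn * 2)" by linarith
    then show ?thesis unfolding y_def using Nn1 \<epsilon>(1) by (simp add: field_simps)
  qed
  define I where "I j = {c + real (2 * j) * y .. c + real (2 * (j + 1)) * y}" for j :: nat
  have cov: "{c..d} \<subseteq> (\<Union>j<Nn. I j)"
    unfolding I_def by (rule cover_intervals[OF cd Nn1]) (simp add: y_def)
  have "m \<le> measure M (\<Union>j<Nn. I j)"
    unfolding m_def using cov sb by (intro finite_measure_mono) (auto simp: I_def)
  also have "\<dots> \<le> (\<Sum>j<Nn. measure M (I j))"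
  proof (rule finite_measure_subadditive_finite)
    have "\<And>j. I j \<in> sets M" using sb unfolding I_def by simp
    then show "I ` {..<Nn} \<subseteq> sets M" by blast
  qed simp
  finally have msum: "m \<le> (\<Sum>j<Nn. measure M (I j))" .
  have "\<exists>j. j < Nn \<and> m / Nn \<le> measure M (I j)"
  proof (rule ccontr)
    assume "\<not> (\<exists>j. j < Nn \<and> m / Nn \<le> measure M (I j))"
    then have lt: "\<And>j. j < Nn \<Longrightarrow> measure M (I j) < m / Nn" by force
    have "(\<Sum>j<Nn. measure M (I j)) < (\<Sum>j<Nn. m / Nn)"
      using Nn1 lt by (intro sum_strict_mono) (auto simp: lessThan_empty_iff)
    also have "\<dots> = m" using Nn1 by simp
    finally show False using msum by simp
  qed
  then obtain j where j: "j < Nn" "m / Nn \<le> measure M (I j)" by blast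
  define xc where "xc = c + (2 * j + 1) * y"
  have Ieq: "I j = {xc - y .. xc + y}" unfolding I_def xc_def by (simp add: algebra_simps)
  have xcin: "xc \<in> {c..d}"
  proof -
    have "real j + 1 \<le> Nn" using j(1) by linarith
    then have h1: "(2 * j + 1) * y \<le> 2 * Nn * y" using ypos by (intro mult_right_mono) auto
    have h2: "2 * Nn * y = d - c" unfolding y_def using Nn1 by simp
    have h3: "xc - c = (2 * j + 1) * y" by (simp add: xc_def)
    have h4: "0 \<le> (2 * j + 1) * y" using ypos by simp
    show ?thesis using h1 h2 h3 h4 by simp
  qed
  have lower: "measure M (I j) / (2*y) \<le> - Im (cauchy_transform M (Complex xc y))"
    unfolding Ieq by (rule Im_ct_lower[OF fin sb ypos])
  have "\<bar>Im (cauchy_transform M (Complex xc y))\<bar> < \<eta>"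
  proof (rule good[OF xcin])
    show "0 < Im (Complex xc y)" using ypos by simp
    have "Complex xc y - complex_of_real xc = Complex 0 y" by (simp add: complex_eq_iff)
    then show "cmod (Complex xc y - complex_of_real xc) < \<epsilon>" using ypos yeps by (simp add: complex_norm)
  qed
  moreover have "2 * \<eta> \<le> measure M (I j) / (2*y)"
  proof -
    have "2 * \<eta> = (m / Nn) / (2*y)" unfolding \<eta>_def y_def using Nn1 cd by (simp add: field_simps)
    also have "\<dots> \<le> measure M (I j) / (2*y)" using j(2) ypos by (intro divide_right_mono) auto
    finally show ?thesis .
  qed
  ultimately show False using lower etapos by linarith
qed

lemma ct_holo:
  assumes "finite_measure M" "sets M = sets borel" "compact K" "K \<noteq> {}" "AE s in M. s \<in> K"
  shows "cauchy_transform M holomorphic_on (- (complex_of_real ` K))"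
proof -
  have "compact (complex_of_real ` K)"
    using assms(3) by (intro compact_continuous_image) (auto intro!: continuous_intros)
  then have op: "open (- (complex_of_real ` K))" by (intro open_Compl compact_imp_closed)
  show ?thesis unfolding holomorphic_on_open[OF op]
    using ct_has_deriv[OF assms] by blast
qed

lemma hol_bound:
  assumes "R holomorphic_on ball 0 e" "e > 0"
  obtains C where "\<And>w. cmod w \<le> e/2 \<Longrightarrow> cmod (R w) \<le> C"
proof -
  have "continuous_on (cball 0 (e/2)) R"
    using assms by (intro holomorphic_on_imp_continuous_on holomorphic_on_subset[OF assms(1)]) auto
  then have "compact (R ` cball 0 (e/2))" by (intro compact_continuous_image) auto
  then obtain C where "\<And>y. y \<in> R ` cball 0 (e/2) \<Longrightarrow> norm y \<le> C"
    using compact_imp_bounded bounded_iff by metis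
  then have "cmod (R w) \<le> C" if "cmod w \<le> e/2" for w using that by auto
  then show ?thesis by (rule that)
qed

locale L21 =
  fixes \<mu>0 :: "real measure" and \<psi>0 :: "real \<Rightarrow> real" and xs \<tau> :: real and \<mu>t :: "real measure"
  assumes A_prob: "compact_prob \<mu>0"
    and A_dens: "\<mu>0 = density lborel (\<lambda>s. ennreal (\<psi>0 s))"
    and A_cont: "continuous_on UNIV \<psi>0"
    and rightmost: "\<forall>y \<in> measure_support \<mu>0. y \<le> xs"
    and tau_pos: "0 < \<tau>"
    and tau_crit: "\<tau> \<le> 1 / (\<integral>s. 1 / (xs - s)\<^sup>2 \<partial>\<mu>0)"
    and conv: "is_free_add_conv \<mu>t \<mu>0 (semicircle \<tau>)"
begin

lemma sb0: "sets \<mu>0 = sets borel" and ps0: "prob_space \<mu>0"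
  using A_prob unfolding compact_prob_def by auto

lemma fin0: "finite_measure \<mu>0" using ps0 unfolding prob_space_def by simp

lemma sp0: "space \<mu>0 = UNIV" using sets_eq_imp_space_eq[OF sb0] by simp

lemma meas0: "measure \<mu>0 (space \<mu>0) = 1" using ps0 by (rule prob_space.prob_space)

definition B0 where "B0 = (SOME B. B > \<bar>xs\<bar> \<and> (AE s in \<mu>0. \<bar>s\<bar> \<le> B))"

lemma B0: "B0 > \<bar>xs\<bar>" "B0 > 0" "AE s in \<mu>0. \<bar>s\<bar> \<le> B0"
proof -
  obtain B where B: "B > 0" "AE s in \<mu>0. \<bar>s\<bar> \<le> B" using compact_prob_bound[OF A_prob] by blast
  have "\<exists>B. B > \<bar>xs\<bar> \<and> (AE s in \<mu>0. \<bar>s\<bar> \<le> B)"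
    by (rule exI[of _ "max B (\<bar>xs\<bar> + 1)"]) (use B(2) in \<open>auto elim: eventually_mono\<close>)
  then have "B0 > \<bar>xs\<bar> \<and> (AE s in \<mu>0. \<bar>s\<bar> \<le> B0)" unfolding B0_def by (rule someI_ex)
  then show "B0 > \<bar>xs\<bar>" "B0 > 0" "AE s in \<mu>0. \<bar>s\<bar> \<le> B0" by auto
qed

lemma AE0: "AE s in \<mu>0. -B0 \<le> s \<and> s < xs"
proof -
  have le: "AE s in \<mu>0. s \<le> xs"
    using AE_in_support[OF sb0] by (rule eventually_mono) (use rightmost in auto)
  have mpsi: "(\<lambda>s. ennreal (\<psi>0 s)) \<in> borel_measurable lborel"
    using borel_measurable_continuous_onI[OF A_cont] by measurable
  have ne: "AE s in \<mu>0. s \<noteq> xs"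
    unfolding A_dens AE_density[OF mpsi]
    using AE_lborel_singleton[of xs] by (rule eventually_mono) auto
  show ?thesis using le ne B0(3) by eventually_elim auto
qed

definition K0 where "K0 = {-B0..xs}"

lemma AEK0: "AE s in \<mu>0. s \<in> K0" using AE0 unfolding K0_def by (rule eventually_mono) auto

definition I2 where "I2 = (\<integral>s. 1 / (xs - s)\<^sup>2 \<partial>\<mu>0)"

lemma I2: "I2 > 0" "integrable \<mu>0 (\<lambda>s. 1 / (xs - s)\<^sup>2)" "\<tau> * I2 \<le> 1"
proof -
  show pos: "I2 > 0"
  proof (rule ccontr)
    assume "\<not> I2 > 0"
    then have "1 / I2 \<le> 0" by (simp add: divide_nonpos_nonneg le_less_linear)
    then show False using tau_crit tau_pos unfolding I2_def[symmetric] by linarith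
  qed
  then show "integrable \<mu>0 (\<lambda>s. 1 / (xs - s)\<^sup>2)"
    unfolding I2_def using not_integrable_integral_eq by fastforce
  show "\<tau> * I2 \<le> 1" using tau_crit pos unfolding I2_def[symmetric] by (simp add: field_simps)
qed

definition I1 where "I1 = (\<integral>s. 1 / (xs - s) \<partial>\<mu>0)"

lemma int1: "integrable \<mu>0 (\<lambda>s. 1 / (xs - s))"
proof (rule Bochner_Integration.integrable_bound)
  show "integrable \<mu>0 (\<lambda>s. 1 + 1 / (xs - s)\<^sup>2)"
    using I2(2) fin0 by (intro Bochner_Integration.integrable_add) (auto simp: finite_measure.integrable_const)
  have "(\<lambda>s::real. 1 / (xs - s)) \<in> borel_measurable borel" by measurable
  then show "(\<lambda>s. 1 / (xs - s)) \<in> borel_measurable \<mu>0" using sb0 measurable_cong_sets by blast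
  show "AE s in \<mu>0. norm (1 / (xs - s)) \<le> norm (1 + 1 / (xs - s)\<^sup>2)"
  proof (rule AE_I2)
    fix s
    define t where "t = xs - s"
    have "\<bar>1 / t\<bar> \<le> 1 + 1 / t\<^sup>2"
    proof (cases "\<bar>t\<bar> \<ge> 1")
      case True
      then have "\<bar>1/t\<bar> \<le> 1" by (simp add: abs_divide divide_le_eq_1)
      then show ?thesis by (smt (verit) zero_le_divide_1_iff zero_le_power2)
    next
      case False
      show ?thesis
      proof (cases "t = 0")
        case True then show ?thesis by simp
      next
        case tnz: False
        have "\<bar>t\<bar> * \<bar>t\<bar> \<le> 1 * \<bar>t\<bar>" using False by (intro mult_right_mono) auto
        then have "\<bar>t\<bar>^2 \<le> \<bar>t\<bar>" by (simp add: power2_eq_square)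
        then have "1/\<bar>t\<bar> \<le> 1/\<bar>t\<bar>^2" using tnz by (intro divide_left_mono) auto
        then show ?thesis by (simp add: abs_divide)
      qed
    qed
    then show "norm (1 / (xs - s)) \<le> norm (1 + 1 / (xs - s)\<^sup>2)" unfolding t_def by simp
  qed
qed

end

lemma recip_le: "0 < b \<Longrightarrow> b \<le> a \<Longrightarrow> 1/a \<le> 1/(b::real)"
  by (simp add: frac_le)

context L21
begin

lemma K0_ne: "K0 \<noteq> {}" and K0_compact: "compact K0"
  using B0(1) unfolding K0_def by auto

definition G0 where "G0 = cauchy_transform \<mu>0"

lemma G0_hol: "G0 holomorphic_on (- (complex_of_real ` K0))"
  unfolding G0_def by (rule ct_holo[OF fin0 sb0 K0_compact K0_ne AEK0])

definition H where "H = {z. xs < Re z}"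

lemma H_open: "open H" and H_convex: "convex H" and H_conn: "connected H"
  unfolding H_def by (auto simp: open_halfspace_Re_gt convex_halfspace_Re_gt intro: convex_connected)

lemma dist_H: "Re z > xs \<Longrightarrow> s \<in> K0 \<Longrightarrow> Re z - xs \<le> cmod (z - of_real s)"
  using abs_Re_le_cmod[of "z - of_real s"] unfolding K0_def by auto

lemma H_sub: "H \<subseteq> - (complex_of_real ` K0)"
  unfolding H_def K0_def by auto

lemma G0_hol_H: "G0 holomorphic_on H"
  using G0_hol H_sub by (rule holomorphic_on_subset)

definition g0 where "g0 u = (\<integral>s. 1/(u - s) \<partial>\<mu>0)" for u

lemma G0_real: "G0 (of_real u) = of_real (g0 u)"
proof -
  have "G0 (of_real u) = (\<integral>s. complex_of_real (1/(u - s)) \<partial>\<mu>0)"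
    unfolding G0_def cauchy_transform_def by simp
  also have "\<dots> = of_real (g0 u)" unfolding g0_def by (rule integral_complex_of_real)
  finally show ?thesis .
qed

lemma G0_int: "Re z > xs \<Longrightarrow> integrable \<mu>0 (\<lambda>s. 1/(z - of_real s))"
proof (rule integrable_bounded_borel[OF fin0 sb0 meas1, where B="1/(Re z - xs)"])
  assume z: "Re z > xs"
  show "AE s in \<mu>0. cmod (1 / (z - complex_of_real s)) \<le> 1 / (Re z - xs)"
    using AEK0
  proof (rule eventually_mono)
    fix s assume "s \<in> K0"
    then have "Re z - xs \<le> cmod (z - of_real s)" using dist_H z by auto
    then show "cmod (1 / (z - complex_of_real s)) \<le> 1 / (Re z - xs)"
      using z by (simp add: norm_divide recip_le)
  qed
qed

lemma G0_norm: "Re z > xs \<Longrightarrow> cmod (G0 z) \<le> 1/(Re z - xs)"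
proof -
  assume z: "Re z > xs"
  have "cmod (G0 z) \<le> 1/(Re z - xs) * measure \<mu>0 (space \<mu>0)"
    unfolding G0_def cauchy_transform_def
  proof (rule norm_integral_const_bound[OF fin0])
    show "0 \<le> 1/(Re z - xs)" using z by simp
    show "AE s in \<mu>0. cmod (1 / (z - complex_of_real s)) \<le> 1 / (Re z - xs)"
      using AEK0
    proof (rule eventually_mono)
      fix s assume "s \<in> K0"
      then have "Re z - xs \<le> cmod (z - of_real s)" using dist_H z by auto
      then show "cmod (1 / (z - complex_of_real s)) \<le> 1 / (Re z - xs)"
        using z by (simp add: norm_divide recip_le)
    qed
  qed
  then show ?thesis using meas0 by simp
qed

definition J where "J z = (\<integral>s. 1/(cmod (z - of_real s))^2 \<partial>\<mu>0)" for z

lemma ImG0: "Re z > xs \<Longrightarrow> Im (G0 z) = - Im z * J z"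
proof -
  assume z: "Re z > xs"
  have "Im (G0 z) = (\<integral>s. Im (1/(z - of_real s)) \<partial>\<mu>0)"
    unfolding G0_def cauchy_transform_def using G0_int[OF z] by (simp add: integral_Im)
  also have "\<dots> = (\<integral>s. (- Im z) * (1/(cmod (z - of_real s))^2) \<partial>\<mu>0)"
    by (rule Bochner_Integration.integral_cong) (auto simp: Im_divide')
  also have "\<dots> = - Im z * J z" unfolding J_def by (rule integral_mult_right_zero)
  finally show ?thesis .
qed

lemma J_nonneg: "J z \<ge> 0"
  unfolding J_def by (intro integral_nonneg_AE) auto

lemma tauJ: "Re z > xs \<Longrightarrow> \<tau> * J z < 1"
proof -
  assume z: "Re z > xs"
  define u where "u = Re z"
  define \<rho> where "\<rho> = (xs + B0) / (u + B0)"
  have xb: "xs + B0 > 0" using B0(1) by linarith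
  have ub: "u + B0 > xs + B0" using z unfolding u_def by simp
  have rho0: "0 < \<rho>" and rho1: "\<rho> < 1" unfolding \<rho>_def using xb ub by auto
  have pt: "1/(cmod (z - of_real s))^2 \<le> \<rho>^2 * (1/(xs - s)^2)" if s: "-B0 \<le> s" "s < xs" for s
  proof -
    have "(u - xs) * (B0 + s) \<ge> 0" using s z unfolding u_def by simp
    then have "(xs - s) * (u + B0) \<le> (xs + B0) * (u - s)" by (simp add: algebra_simps)
    then have a: "xs - s \<le> \<rho> * (u - s)" unfolding \<rho>_def using ub xb by (simp add: field_simps)
    have "u - s \<le> cmod (z - of_real s)" using abs_Re_le_cmod[of "z - of_real s"] unfolding u_def by simp
    then have "xs - s \<le> \<rho> * cmod (z - of_real s)" using a rho0 by (smt (verit) mult_left_mono)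
    then have "(xs - s)^2 \<le> (\<rho> * cmod (z - of_real s))^2" using s by (intro power_mono) auto
    then have b: "(xs - s)^2 \<le> \<rho>^2 * (cmod (z - of_real s))^2" by (simp add: power_mult_distrib)
    have p1: "(xs - s)^2 > 0" using s by simp
    have "0 < cmod (z - of_real s)" using \<open>u - s \<le> _\<close> s z unfolding u_def by linarith
    then have p2: "(cmod (z - of_real s))^2 > 0" by simp
    show ?thesis using b p1 p2 by (simp add: field_simps)
  qed
  have "J z \<le> (\<integral>s. \<rho>^2 * (1/(xs - s)^2) \<partial>\<mu>0)"
    unfolding J_def
  proof (rule integral_mono_AE')
    show "integrable \<mu>0 (\<lambda>s. \<rho>^2 * (1/(xs - s)^2))" using I2(2) by (rule integrable_mult_right)
    show "AE s in \<mu>0. 1/(cmod (z - of_real s))^2 \<le> \<rho>^2 * (1/(xs - s)^2)"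
      using AE0 by (rule eventually_mono) (use pt in auto)
    show "AE s in \<mu>0. 0 \<le> \<rho>^2 * (1/(xs - s)^2)" by simp
  qed
  also have "\<dots> = \<rho>^2 * I2" unfolding I2_def by (rule integral_mult_right_zero)
  finally have "\<tau> * J z \<le> \<rho>^2 * (\<tau> * I2)" using tau_pos by (simp add: algebra_simps mult_left_mono)
  also have "\<dots> \<le> \<rho>^2" using I2(3) by (simp add: mult_left_le)
  also have "\<dots> < 1" using rho0 rho1 by (simp add: power_less_one_iff)
  finally show ?thesis .
qed

definition F where "F z = z + of_real \<tau> * G0 z" for z

lemma F_hol: "F holomorphic_on H"
  unfolding F_def[abs_def] by (intro holomorphic_intros G0_hol_H)

lemma ImF: "Re z > xs \<Longrightarrow> Im (F z) = Im z * (1 - \<tau> * J z)"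
  unfolding F_def using ImG0 by (simp add: algebra_simps)

lemma ImF_pos_iff: "Re z > xs \<Longrightarrow> 0 < Im (F z) \<longleftrightarrow> 0 < Im z"
proof -
  assume z: "Re z > xs"
  have "0 < 1 - \<tau> * J z" using tauJ[OF z] by simp
  then show ?thesis unfolding ImF[OF z] by (simp add: zero_less_mult_iff)
qed

lemma F_real: "F (of_real u) = of_real (u + \<tau> * g0 u)"
  unfolding F_def G0_real by simp

lemma g0_int: "u > xs \<Longrightarrow> integrable \<mu>0 (\<lambda>s. 1/(u - s))"
proof -
  assume u: "u > xs"
  have "integrable \<mu>0 (\<lambda>s. Re (1/(of_real u - complex_of_real s)))"
    using G0_int[of "of_real u"] u by (intro integrable_Re) auto
  then show ?thesis by simp
qed

lemma g0_mono: "u > xs \<Longrightarrow> 0 \<le> g0 u \<and> g0 u \<le> I1"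
proof -
  assume u: "u > xs"
  have "AE s in \<mu>0. 0 \<le> 1/(u - s)" using AE0 by (rule eventually_mono) (use u in auto)
  then have "0 \<le> g0 u" unfolding g0_def by (intro integral_nonneg_AE)
  moreover have "g0 u \<le> I1" unfolding g0_def I1_def
  proof (rule integral_mono_AE[OF g0_int[OF u] int1])
    show "AE s in \<mu>0. 1 / (u - s) \<le> 1 / (xs - s)"
      using AE0 by (rule eventually_mono) (use u in \<open>auto intro!: divide_left_mono\<close>)
  qed
  ultimately show ?thesis by simp
qed

lemma g0_bounds: "u > B0 \<Longrightarrow> 1/(u + B0) \<le> g0 u \<and> g0 u \<le> 1/(u - B0)"
proof -
  assume u: "u > B0"
  have uxs: "u > xs" using u B0(1) by linarith
  have "(\<integral>s. 1/(u + B0) \<partial>\<mu>0) \<le> g0 u" unfolding g0_def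
  proof (rule integral_mono_AE[OF _ g0_int[OF uxs]])
    show "integrable \<mu>0 (\<lambda>s. 1/(u + B0))" using fin0 by (simp add: finite_measure.integrable_const)
    show "AE s in \<mu>0. 1/(u + B0) \<le> 1/(u - s)"
      using B0(3) by (rule eventually_mono) (use u B0(2) in \<open>auto intro!: divide_left_mono\<close>)
  qed
  moreover have "g0 u \<le> (\<integral>s. 1/(u - B0) \<partial>\<mu>0)" unfolding g0_def
  proof (rule integral_mono_AE[OF g0_int[OF uxs]])
    show "integrable \<mu>0 (\<lambda>s. 1/(u - B0))" using fin0 by (simp add: finite_measure.integrable_const)
    show "AE s in \<mu>0. 1/(u - s) \<le> 1/(u - B0)"
      using B0(3) by (rule eventually_mono) (use u B0(2) in \<open>auto intro!: divide_left_mono\<close>)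
  qed
  ultimately show ?thesis using meas0 by simp
qed

end

lemma semi_pos: "\<tau> > 0 \<Longrightarrow> measure (semicircle \<tau>) (space (semicircle \<tau>)) > 0"
proof (rule ccontr)
  assume tau: "\<tau> > 0" and "\<not> measure (semicircle \<tau>) (space (semicircle \<tau>)) > 0"
  then have m0: "measure (semicircle \<tau>) (space (semicircle \<tau>)) = 0" using measure_nonneg[of "semicircle \<tau>"] by (meson not_less order_antisym)
  interpret finite_measure "semicircle \<tau>" using semi_fin[OF tau] .
  have "emeasure (semicircle \<tau>) (space (semicircle \<tau>)) = 0" using m0 by (simp add: emeasure_eq_measure)
  then have ae: "AE s in semicircle \<tau>. False" by (intro AE_I[of _ _ "space (semicircle \<tau>)"]) auto
  define z where "z = 4 * sqrt \<tau>"
  have z: "z > 2 * sqrt \<tau>" unfolding z_def using tau by simp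
  have "cauchy_transform (semicircle \<tau>) (of_real z) = 0"
    unfolding cauchy_transform_def by (rule integral_eq_zero_AE) (use ae in \<open>auto elim: eventually_mono\<close>)
  moreover have "(z - sqrt (z^2 - 4*\<tau>))/(2*\<tau>) \<noteq> 0"
  proof -
    have zpos: "z > 0" unfolding z_def using tau by simp
    have "z^2 - 4*\<tau> < z^2" using tau by simp
    then have "sqrt (z^2 - 4*\<tau>) < sqrt (z^2)" by (rule real_sqrt_less_mono)
    also have "sqrt (z^2) = z" by (simp only: real_sqrt_abs abs_of_pos[OF zpos])
    finally show ?thesis using tau by simp
  qed
  ultimately show False using semi_ct[OF tau z] by simp
qed

context L21
begin

lemma sbt: "sets \<mu>t = sets borel" and pst: "prob_space \<mu>t"
  using conv unfolding is_free_add_conv_def compact_prob_def by auto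

lemma fint: "finite_measure \<mu>t" using pst unfolding prob_space_def by simp

lemma meast: "measure \<mu>t (space \<mu>t) = 1" using pst by (rule prob_space.prob_space)

definition Bt where "Bt = (SOME B. B > 0 \<and> (AE s in \<mu>t. \<bar>s\<bar> \<le> B))"

lemma Bt: "Bt > 0" "AE s in \<mu>t. \<bar>s\<bar> \<le> Bt"
proof -
  have cp: "compact_prob \<mu>t" using conv unfolding is_free_add_conv_def by auto
  have "\<exists>B. B > 0 \<and> (AE s in \<mu>t. \<bar>s\<bar> \<le> B)" using compact_prob_bound[OF cp] by metis
  then have "Bt > 0 \<and> (AE s in \<mu>t. \<bar>s\<bar> \<le> Bt)" unfolding Bt_def by (rule someI_ex)
  then show "Bt > 0" "AE s in \<mu>t. \<bar>s\<bar> \<le> Bt" by auto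
qed

definition Kt where "Kt = {-Bt..Bt}"

definition Gt where "Gt = cauchy_transform \<mu>t"

lemma Gt_hol: "Gt holomorphic_on (- (complex_of_real ` Kt))"
  unfolding Gt_def Kt_def
  by (rule ct_holo[OF fint sbt]) (use Bt in \<open>auto elim: eventually_mono\<close>)

lemma agree_real: "\<exists>U0. \<forall>u\<ge>U0. Gt (F (of_real u)) = G0 (of_real u)"
proof -
  obtain e R0 Rs Rt where Re0: "R_transform_on \<mu>0 R0 e" and Res: "R_transform_on (semicircle \<tau>) Rs e"
    and Ret: "R_transform_on \<mu>t Rt e" and Radd: "\<forall>w\<in>ball 0 e. Rt w = R0 w + Rs w"
    using conv unfolding is_free_add_conv_def by blast
  have e: "e > 0" and R0h: "R0 holomorphic_on ball 0 e" and Rsh: "Rs holomorphic_on ball 0 e"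
    using Re0 Res unfolding R_transform_on_def by auto
  obtain C0 where C0: "\<And>w. cmod w \<le> e/2 \<Longrightarrow> cmod (R0 w) \<le> C0" using hol_bound[OF R0h e] by blast
  obtain Cs where Cs: "\<And>w. cmod w \<le> e/2 \<Longrightarrow> cmod (Rs w) \<le> Cs" using hol_bound[OF Rsh e] by blast
  define a where "a = 2 * sqrt \<tau>"
  have apos: "a > 0" unfolding a_def using tau_pos by simp
  define W where "W = \<bar>C0\<bar> + \<bar>Cs\<bar> + 8*B0 + 8*a + sqrt \<tau> + 2/e + 1"
  have nn: "0 \<le> \<bar>C0\<bar>" "0 \<le> \<bar>Cs\<bar>" "0 < 8*B0" "0 < 8*a" "0 \<le> sqrt \<tau>" "0 < 2/e"
    using B0(2) apos e tau_pos by auto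
  have Wpos: "W > 0" unfolding W_def using nn by linarith
  define U0 where "U0 = 9*B0 + W + 1"
  have "Gt (F (of_real u)) = G0 (of_real u)" if u: "u \<ge> U0" for u
  proof -
    define w where "w = g0 u"
    have uB: "u > B0" using u B0(2) Wpos unfolding U0_def by simp
    have wb: "1/(u + B0) \<le> w" "w \<le> 1/(u - B0)" using g0_bounds[OF uB] unfolding w_def by auto
    have wpos: "w > 0" using wb(1) uB B0(2) by (smt (verit) divide_pos_pos)
    have "W \<le> u - B0" using u unfolding U0_def using B0(2) by simp
    then have "1/(u - B0) \<le> 1/W" using Wpos by (intro recip_le) auto
    then have "w \<le> 1/W" using wb(2) by simp
    then have Ww: "W \<le> 1/w" using wpos Wpos by (simp add: field_simps)
    have hW1: "8*B0 + \<bar>C0\<bar> \<le> 1/w" using Ww nn unfolding W_def by linarith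
    have hW2: "8*a + \<bar>Cs\<bar> \<le> 1/w" using Ww nn unfolding W_def by linarith
    have hW3: "2/e \<le> 1/w" using Ww nn unfolding W_def by linarith
    have hW4: "sqrt \<tau> < 1/w" using Ww nn unfolding W_def by linarith
    have hW5: "8*a \<le> 1/w" using Ww nn unfolding W_def by linarith
    define cw where "cw = complex_of_real w"
    have ncw: "cmod cw = w" unfolding cw_def using wpos by simp
    have we2: "w \<le> e/2"
    proof -
      show ?thesis using hW3 wpos e by (simp add: field_simps)
    qed
    have cwball: "cw \<in> ball 0 e - {0}" using ncw we2 e wpos unfolding cw_def by auto
    have inv_cw: "1/cw = complex_of_real (1/w)" unfolding cw_def by simp
    have big: "L \<le> cmod (R cw + 1/cw)" if "cmod (R cw) \<le> C" "L + \<bar>C\<bar> \<le> 1/w" for R :: "complex \<Rightarrow> complex" and C L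
    proof -
      have "cmod (1/cw) \<le> cmod (R cw + 1/cw) + cmod (R cw)"
        using norm_triangle_ineq4[of "R cw + 1/cw" "R cw"] by simp
      moreover have "cmod (1/cw) = 1/w" unfolding inv_cw using wpos by (simp add: norm_divide)
      ultimately show ?thesis using that by linarith
    qed
    have k0: "R0 cw + 1/cw = of_real u"
    proof (rule ct_inj[OF fin0 sb0 B0(3) B0(2)])
      show "0 < measure \<mu>0 (space \<mu>0)" using meas0 by simp
      show "8 * B0 \<le> cmod (R0 cw + 1/cw)"
        by (rule big[OF C0]) (use ncw we2 hW1 in auto)
      show "8 * B0 \<le> cmod (complex_of_real u)" using u B0(2) Wpos unfolding U0_def by simp
      have "cauchy_transform \<mu>0 (R0 cw + 1/cw) = cw" using Re0 cwball unfolding R_transform_on_def by blast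
      also have "\<dots> = cauchy_transform \<mu>0 (of_real u)" using G0_real[of u] unfolding G0_def w_def cw_def by simp
      finally show "cauchy_transform \<mu>0 (R0 cw + 1/cw) = cauchy_transform \<mu>0 (of_real u)" .
    qed
    define zz where "zz = \<tau> * w + 1/w"
    have sqt: "w * sqrt \<tau> < 1"
    proof -
      show ?thesis using hW4 wpos by (simp add: field_simps)
    qed
    have tw: "\<tau> * w \<le> 1/w"
    proof -
      have "(w * sqrt \<tau>)^2 \<le> 1" using sqt wpos tau_pos by (simp add: power_le_one)
      then have "\<tau> * w^2 \<le> 1" using tau_pos by (simp add: power_mult_distrib mult.commute)
      then show ?thesis using wpos by (simp add: field_simps power2_eq_square)
    qed
    have zza: "zz > 2 * sqrt \<tau>"
    proof -
      have "0 < \<tau> * w" using wpos tau_pos by simp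
      then show ?thesis unfolding zz_def using hW5 apos unfolding a_def by linarith
    qed
    have "zz^2 - 4*\<tau> = (1/w - \<tau> * w)^2"
      unfolding zz_def using wpos by (simp add: field_simps power2_eq_square)
    then have "sqrt (zz^2 - 4*\<tau>) = 1/w - \<tau> * w" using tw by simp
    then have "(zz - sqrt (zz^2 - 4*\<tau>))/(2*\<tau>) = w" unfolding zz_def using tau_pos by (simp add: field_simps)
    then have gs: "cauchy_transform (semicircle \<tau>) (of_real zz) = cw"
      using semi_ct[OF tau_pos zza] unfolding cw_def by simp
    have AEa: "AE s in semicircle \<tau>. \<bar>s\<bar> \<le> a"
      using semi_AE[OF tau_pos] unfolding a_def by (rule eventually_mono) auto
    have ks: "Rs cw + 1/cw = of_real zz"
    proof (rule ct_inj[OF semi_fin[OF tau_pos] semi_sets[OF tau_pos] AEa apos semi_pos[OF tau_pos]])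
      show "8 * a \<le> cmod (Rs cw + 1/cw)"
        by (rule big[OF Cs]) (use ncw we2 hW2 in auto)
      have "0 < \<tau> * w" using wpos tau_pos by simp
      then have "8 * a \<le> zz" unfolding zz_def using hW5 by linarith
      moreover have zzp: "zz > 0" using zza tau_pos by (smt (verit) real_sqrt_ge_zero)
      moreover have "cmod (complex_of_real zz) = zz" by (simp only: norm_of_real abs_of_pos[OF zzp])
      ultimately show "8 * a \<le> cmod (complex_of_real zz)" by simp
      have "cauchy_transform (semicircle \<tau>) (Rs cw + 1/cw) = cw" using Res cwball unfolding R_transform_on_def by blast
      then show "cauchy_transform (semicircle \<tau>) (Rs cw + 1/cw) = cauchy_transform (semicircle \<tau>) (of_real zz)"
        using gs by simp
    qed
    have "Rt cw + 1/cw = (R0 cw + 1/cw) + (Rs cw + 1/cw) - 1/cw" using Radd cwball by simp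
    also have "\<dots> = of_real u + of_real zz - 1/cw" by (simp only: k0 ks)
    also have "\<dots> = of_real u + of_real (\<tau> * w)" unfolding zz_def inv_cw by simp
    also have "\<dots> = F (of_real u)" unfolding F_real w_def by simp
    finally have "Rt cw + 1/cw = F (of_real u)" .
    moreover have "cauchy_transform \<mu>t (Rt cw + 1/cw) = cw" using Ret cwball unfolding R_transform_on_def by blast
    ultimately show ?thesis unfolding Gt_def using G0_real[of u] unfolding cw_def w_def by simp
  qed
  then show ?thesis by blast
qed

end

context L21
begin

lemma agree_Q: "xs < Re z \<Longrightarrow> 0 < Im z \<Longrightarrow> Gt (F z) = G0 z"
proof -
  assume z: "xs < Re z" "0 < Im z"
  obtain U0 where U0: "\<And>u. u \<ge> U0 \<Longrightarrow> Gt (F (of_real u)) = G0 (of_real u)" using agree_real by blast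
  define R1 where "R1 = max U0 (\<bar>xs\<bar> + 1 + Bt + \<tau>)"
  define S1 where "S1 = {z. xs < Re z} \<inter> {z. 0 < Im z}"
  define S2 where "S2 = {z. R1 < Re z}"
  define S where "S = S1 \<union> S2"
  have R1: "R1 \<ge> \<bar>xs\<bar> + 1 + Bt + \<tau>" "R1 \<ge> U0" unfolding R1_def by auto
  have SH: "S \<subseteq> H" unfolding S_def S1_def S2_def H_def using R1 Bt(1) tau_pos by auto
  have opS: "open S" unfolding S_def S1_def S2_def
    by (intro open_Un open_Int open_halfspace_Re_gt open_halfspace_Im_gt)
  have S1c: "connected S1" unfolding S1_def
    by (intro convex_connected convex_Int convex_halfspace_Re_gt convex_halfspace_Im_gt)
  have S2c: "connected S2" unfolding S2_def by (intro convex_connected convex_halfspace_Re_gt)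
  have "Complex (R1 + 1) 1 \<in> S1 \<inter> S2" unfolding S1_def S2_def using R1 Bt(1) tau_pos by auto
  then have conS: "connected S" unfolding S_def by (intro connected_Un S1c S2c) auto
  have Fmap: "F ` S \<subseteq> - (complex_of_real ` Kt)"
  proof
    fix p assume "p \<in> F ` S"
    then obtain z where zS: "z \<in> S" and p: "p = F z" by auto
    show "p \<in> - (complex_of_real ` Kt)"
    proof (cases "z \<in> S1")
      case True
      then have "xs < Re z" "0 < Im z" unfolding S1_def by auto
      then have "0 < Im (F z)" using ImF_pos_iff by auto
      then show ?thesis unfolding p by auto
    next
      case False
      then have zR: "R1 < Re z" using zS unfolding S_def S2_def by auto
      have zx: "Re z - xs \<ge> 1" using zR R1 Bt(1) tau_pos by linarith
      have "cmod (G0 z) \<le> 1/(Re z - xs)" using G0_norm zx by simp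
      also have "\<dots> \<le> 1" using zx by simp
      finally have g1: "cmod (G0 z) \<le> 1" .
      have "\<bar>Re (G0 z)\<bar> \<le> cmod (G0 z)" by (rule abs_Re_le_cmod)
      then have "- 1 \<le> Re (G0 z)" using g1 by linarith
      then have "\<tau> * (- 1) \<le> \<tau> * Re (G0 z)" using tau_pos by (intro mult_left_mono) auto
      then have "- \<tau> \<le> \<tau> * Re (G0 z)" by simp
      moreover have "Re (F z) = Re z + \<tau> * Re (G0 z)" unfolding F_def by simp
      ultimately have "Re (F z) > Bt" using zR R1 by linarith
      then show ?thesis unfolding p Kt_def by auto
    qed
  qed
  have holh: "(\<lambda>z. Gt (F z) - G0 z) holomorphic_on S"
  proof (intro holomorphic_on_diff)
    have "(Gt \<circ> F) holomorphic_on S"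
      by (rule holomorphic_on_compose_gen[OF holomorphic_on_subset[OF F_hol SH] Gt_hol Fmap])
    then show "(\<lambda>z. Gt (F z)) holomorphic_on S" by (simp add: o_def)
    show "G0 holomorphic_on S" using G0_hol_H SH by (rule holomorphic_on_subset)
  qed
  define U where "U = complex_of_real ` {R1 + 1<..}"
  have US: "U \<subseteq> S" unfolding U_def S_def S2_def by auto
  have xiS: "complex_of_real (R1 + 2) \<in> S" unfolding S_def S2_def by auto
  have lim: "complex_of_real (R1 + 2) islimpt U"
    unfolding islimpt_approachable
  proof (intro allI impI)
    fix \<epsilon> :: real assume e: "\<epsilon> > 0"
    define t where "t = min (\<epsilon>/2) 1"
    have t: "t > 0" "t < \<epsilon>" "t \<le> 1" unfolding t_def using e by auto
    show "\<exists>x'\<in>U. x' \<noteq> complex_of_real (R1 + 2) \<and> dist x' (complex_of_real (R1 + 2)) < \<epsilon>"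
    proof (intro bexI conjI)
      show "complex_of_real (R1 + 2 + t) \<noteq> complex_of_real (R1 + 2)" using t by simp
      have "dist (complex_of_real (R1 + 2 + t)) (complex_of_real (R1 + 2)) = t"
        using t by (simp add: dist_norm)
      then show "dist (complex_of_real (R1 + 2 + t)) (complex_of_real (R1 + 2)) < \<epsilon>" using t by simp
      have "R1 + 2 + t \<in> {R1 + 1<..}" using t by simp
      then show "complex_of_real (R1 + 2 + t) \<in> U" unfolding U_def by (rule imageI)
    qed
  qed
  have h0: "Gt (F p) - G0 p = 0" if pU: "p \<in> U" for p
  proof -
    obtain u where u: "u > R1 + 1" "p = of_real u" using pU unfolding U_def by auto
    then have "u \<ge> U0" using R1 by linarith
    then show ?thesis using U0 u by simp
  qed
  have zS: "z \<in> S" using z unfolding S_def S1_def by auto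
  have "Gt (F z) - G0 z = 0"
    by (rule analytic_continuation[OF holh opS conS US xiS lim h0 zS])
  then show ?thesis by simp
qed

end

context L21
begin

lemma I1_nonneg: "I1 \<ge> 0"
  using g0_mono[of "xs + 1"] by simp

lemma boundary:
  assumes x: "x > xs + \<tau> * I1" and eta: "\<eta> > 0"
  shows "\<exists>\<delta>>0. \<forall>w. 0 < Im w \<longrightarrow> cmod (w - of_real x) < \<delta> \<longrightarrow> \<bar>Im (Gt w)\<bar> < \<eta>"
proof -
  define f where "f u = Re (F (of_real u))" for u
  have f_eq: "F (of_real u) = of_real (f u)" for u unfolding f_def F_real by simp
  have f_val: "f u = u + \<tau> * g0 u" for u unfolding f_def F_real by simp
  define u1 where "u1 = xs + (x - (xs + \<tau> * I1)) / 2"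
  define u2 where "u2 = x + 1"
  have u1xs: "u1 > xs" unfolding u1_def using x by simp
  have fu1: "f u1 < x"
  proof -
    have "g0 u1 \<le> I1" using g0_mono[OF u1xs] by simp
    then have "\<tau> * g0 u1 \<le> \<tau> * I1" using tau_pos by simp
    moreover have ar: "\<And>a b X Y :: real. a \<le> b \<Longrightarrow> Y + b < X \<Longrightarrow> Y + (X - (Y + b))/2 + a < X"
      by (simp add: field_simps)
    ultimately show ?thesis unfolding f_val u1_def using ar x by blast
  qed
  have u2xs: "u2 > xs" unfolding u2_def using x I1_nonneg tau_pos
    by (smt (verit) mult_nonneg_nonneg)
  have fu2: "f u2 \<ge> x"
  proof -
    have "0 \<le> g0 u2" using g0_mono[OF u2xs] by simp
    then show ?thesis unfolding f_val u2_def using tau_pos by simp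
  qed
  have u12: "u1 \<le> u2"
  proof -
    have "0 \<le> g0 u1" using g0_mono[OF u1xs] by simp
    then have "u1 \<le> f u1" unfolding f_val using tau_pos by simp
    then show ?thesis using fu1 unfolding u2_def by simp
  qed
  have Fcont: "continuous_on H F" using F_hol by (rule holomorphic_on_imp_continuous_on)
  have "continuous_on {u1..u2} (\<lambda>u. F (of_real u))"
    by (rule continuous_on_compose2[OF Fcont]) (use u1xs in \<open>auto intro!: continuous_intros simp: H_def\<close>)
  then have fcont: "continuous_on {u1..u2} f" unfolding f_def by (intro continuous_intros)
  obtain ub where ub: "u1 \<le> ub" "ub \<le> u2" "f ub = x"
    using IVT'[of f u1 x u2, OF less_imp_le[OF fu1] fu2 u12 fcont] by blast
  have ubxs: "ub > xs" using ub(1) u1xs by simp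
  have Fub: "F (of_real ub) = of_real x" using f_eq[of ub] ub(3) by simp
  have ubH: "complex_of_real ub \<in> H" unfolding H_def using ubxs by simp
  have "isCont G0 (of_real ub)"
    using holomorphic_on_imp_continuous_on[OF G0_hol_H] H_open ubH continuous_on_eq_continuous_at by blast
  then obtain r where r: "r > 0" "\<And>z. dist z (of_real ub) < r \<Longrightarrow> dist (G0 z) (G0 (of_real ub)) < \<eta>"
    unfolding continuous_at_eps_delta using eta by blast
  define r' where "r' = min r ((ub - xs)/2)"
  have r'1: "r' > 0" unfolding r'_def using r ubxs by simp
  have r'2: "r' \<le> r" unfolding r'_def by (rule min.cobounded1)
  have r'3: "r' \<le> (ub - xs)/2" unfolding r'_def by (rule min.cobounded2)
  note r' = r'1 r'2 r'3
  have ballH: "ball (complex_of_real ub) r' \<subseteq> H"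
  proof
    fix z assume "z \<in> ball (complex_of_real ub) r'"
    then have "cmod (z - of_real ub) < r'" by (simp add: dist_norm norm_minus_commute)
    moreover have "\<bar>Re (z - of_real ub)\<bar> \<le> cmod (z - of_real ub)" by (rule abs_Re_le_cmod)
    ultimately show "z \<in> H" unfolding H_def using r' by auto
  qed
  have nconst: "\<not> F constant_on H"
  proof
    assume "F constant_on H"
    then obtain c where c: "\<And>z. z \<in> H \<Longrightarrow> F z = c" unfolding constant_on_def by blast
    have "F (of_real u1) = F (of_real ub)" using c u1xs ubxs unfolding H_def by simp
    then have "f u1 = f ub" unfolding f_def by simp
    then show False using fu1 ub(3) by simp
  qed
  have "open (F ` ball (complex_of_real ub) r')"
    by (rule open_mapping_thm[OF F_hol H_open H_conn open_ball ballH nconst])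
  moreover have "complex_of_real x \<in> F ` ball (complex_of_real ub) r'"
    using Fub r' by (metis centre_in_ball imageI)
  ultimately obtain \<delta> where \<delta>: "\<delta> > 0" "ball (complex_of_real x) \<delta> \<subseteq> F ` ball (complex_of_real ub) r'"
    using open_contains_ball_eq by blast
  have "\<bar>Im (Gt w)\<bar> < \<eta>" if w: "0 < Im w" "cmod (w - of_real x) < \<delta>" for w
  proof -
    have "w \<in> ball (complex_of_real x) \<delta>" using w(2) by (simp add: dist_norm norm_minus_commute)
    then obtain z where z: "z \<in> ball (complex_of_real ub) r'" "w = F z" using \<delta>(2) by auto
    have zH: "xs < Re z" using z(1) ballH unfolding H_def by auto
    have "0 < Im (F z)" using w(1) z(2) by simp
    then have "0 < Im z" using ImF_pos_iff[OF zH] by simp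
    then have "Gt w = G0 z" using agree_Q[OF zH] z(2) by simp
    moreover have "Im (G0 (of_real ub)) = 0" unfolding G0_real by simp
    moreover have "dist (G0 z) (G0 (of_real ub)) < \<eta>"
      using r(2)[of z] z(1) r'(2) by (simp add: dist_commute)
    ultimately show ?thesis
      using abs_Im_le_cmod[of "G0 z - G0 (of_real ub)"] by (simp add: dist_norm)
  qed
  then show ?thesis using \<delta>(1) by blast
qed

lemma main: "emeasure \<mu>t {xs + \<tau> * I1 <..} = 0"
  by (rule no_mass[OF fint sbt]) (use boundary in \<open>auto simp: Gt_def\<close>)

end

theorem lemma2p1:
  fixes \<mu>\<^sub>0 :: "real measure" and \<psi>\<^sub>0 :: "real \<Rightarrow> real"
    and xs c\<^sub>0 \<epsilon> \<tau> :: real and k :: nat and h :: "real \<Rightarrow> real"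
    and \<mu>\<^sub>\<tau> :: "real measure"
  assumes A_prob: "compact_prob \<mu>\<^sub>0"
    and A_dens: "\<mu>\<^sub>0 = density lborel (\<lambda>s. ennreal (\<psi>\<^sub>0 s))"
    and A_nonneg: "\<forall>s. \<psi>\<^sub>0 s \<ge> 0"
    and A_cont: "continuous_on UNIV \<psi>\<^sub>0"
    and B_xs: "xs \<in> measure_support \<mu>\<^sub>0"
    and B_c0: "c\<^sub>0 > 0"
    and B_k: "k \<ge> 1"
    and B_h: "real_analytic_near h xs" "h xs = 1"
    and B_eps: "\<epsilon> > 0"
    and B_left: "\<forall>s \<in> {xs - \<epsilon> .. xs}.
        \<psi>\<^sub>0 s = c\<^sub>0 powr (2 * real k + 3/2) * (xs - s) powr (2 * real k + 1/2) * h s"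
    and B_right: "\<forall>s \<in> {xs .. xs + \<epsilon>}. \<psi>\<^sub>0 s = 0"
    and rightmost: "\<forall>y \<in> measure_support \<mu>\<^sub>0. y \<le> xs"
    and tau_pos: "0 < \<tau>"
    and tau_crit: "\<tau> \<le> 1 / (\<integral>s. 1 / (xs - s)\<^sup>2 \<partial>\<mu>\<^sub>0)"
    and conv: "is_free_add_conv \<mu>\<^sub>\<tau> \<mu>\<^sub>0 (semicircle \<tau>)"
  shows "emeasure \<mu>\<^sub>\<tau> {xs + \<tau> * (\<integral>s. 1 / (xs - s) \<partial>\<mu>\<^sub>0) <..} = 0"
proof -
  interpret L21 "\<mu>\<^sub>0" "\<psi>\<^sub>0" xs \<tau> "\<mu>\<^sub>\<tau>"
    by unfold_locales (use A_prob A_dens A_cont rightmost tau_pos tau_crit conv in auto)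
  show ?thesis using main unfolding I1_def .
qed

end
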